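(* Let $\mathsf{S}$ be a kinematic system and $\mathbf{u}:X\to\mathbb{R}^n$ be of PIK form, $\mathbf{u}=\mathbf{R}^{-1}\hat{\mathbf{J}}^T\mathbf{C}_D^T\mathbf{L}\mathbf{r}'$, for a block lower triangular $\mathbf{L}:X\to\mathbb{R}^{m\times m}$. Assume that $\mathbf{r}'$ is linearly bounded, i.e. there exist $\gamma,c\in[0,\infty)$ with $\|\mathbf{r}'(t,\mathbf{q})\|\le\gamma\|\mathbf{q}\|+c$ for all $(t,\mathbf{q})\in X$, and that $\mathbf{F}_q$, $\mathbf{R}^{-1}$ and $\mathbf{L}$ are bounded on $X$. Then for every $(t_0,\mathbf{q}_0)\in X$ there exists a Krasovskii solution $\mathbf{q}:[t_0,\infty)\to\mathbb{R}^n$ of $\dot{\mathbf{q}}=\mathbf{u}(t,\mathbf{q})$ with $\mathbf{q}(t_0)=\mathbf{q}_0$.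
   Context: Kinematic system: integers $l\ge2$, $m_1,\dots,m_l\ge1$, $m=m_1+\dots+m_l\le n$; $X=\mathbb{R}\times\mathbb{R}^n$ with points $\mathbf{x}=(t,\mathbf{q})$; maps $\mathbf{F}=[\mathbf{f}_t\ \mathbf{F}_q]:X\to\mathbb{R}^{m\times(n+1)}$ ($\mathbf{f}_t:X\to\mathbb{R}^m$, $\mathbf{F}_q:X\to\mathbb{R}^{m\times n}$), $\mathbf{R}:X\to\{$invertible $n\times n$ matrices$\}$, $\mathbf{r}:X\to\mathbb{R}^m$; row blocks of sizes $m_1,\dots,m_l$ are indexed by tasks $a=1,\dots,l$ (e.g. $\mathbf{r}=(\mathbf{r}_1,\dots,\mathbf{r}_l)$). Put $\mathbf{r}'=\mathbf{r}-\mathbf{f}_t$ and $\mathbf{J}=\mathbf{F}_q\mathbf{R}^{-1}$. Orthogonalization: at each $\mathbf{x}$, with rows $\mathbf{j}_i$ of $\mathbf{J}(\mathbf{x})$, for $i=1,\dots,m$ put $\mathbf{v}_i=\mathbf{j}_i-\sum_{k<i,c_{kk}>0}\langle\hat{\mathbf{j}}_k,\mathbf{j}_i\rangle\hat{\mathbf{j}}_k$, $c_{ii}=\|\mathbf{v}_i\|$, $\hat{\mathbf{j}}_i=\mathbf{v}_i/c_{ii}$ if $c_{ii}>0$, $c_{ik}=\langle\hat{\mathbf{j}}_k,\mathbf{j}_i\rangle$ for $k<i$, $c_{kk}>0$, and $c_{ik}=0$ otherwise; remaining rows $\hat{\mathbf{j}}_i$ (those with $c_{ii}=0$ and $i>m$)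 form an orthonormal basis of the null space of $\mathbf{J}(\mathbf{x})$, giving an orthogonal $\hat{\mathbf{J}}_e$ with $\mathbf{J}=\mathbf{C}_e\hat{\mathbf{J}}_e$. $\mathbf{C}=[c_{ik}]_{i,k\le m}$ is partitioned into blocks $\mathbf{C}_{ab}\in\mathbb{R}^{m_a\times m_b}$, $\mathbf{C}_D=\mathrm{diag}(\mathbf{C}_{11},\dots,\mathbf{C}_{ll})$; $\hat{\mathbf{J}}$ is the top $m\times n$ block of $\hat{\mathbf{J}}_e$. PIK form: $\mathbf{L}=[\mathbf{L}_{ab}]$ with $\mathbf{L}_{ab}:X\to\mathbb{R}^{m_a\times m_b}$, $\mathbf{L}_{ab}=\mathbf{0}$ for $b>a$. Krasovskii solution: with $U(\mathbf{x})=\bigcap_{\delta>0}\overline{\mathrm{co}}\,\mathbf{u}(\mathbf{x}+\delta B_{n+1})$ ($\overline{\mathrm{co}}$ = closed convex hull, $B_{n+1}$ closed unit ball of $X$), a function $\mathbf{q}$ that is absolutely continuous on every compact subinterval of $[t_0,\infty)$, satisfies $\mathbf{q}(t_0)=\mathbf{q}_0$ and $\dot{\mathbf{q}}(t)\in U(t,\mathbf{q}(t))$ for almost every $t>t_0$. *)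

theory Defs
  imports "HOL-Analysis.Analysis"
begin

definition abs_cont_on :: "real \<Rightarrow> real \<Rightarrow> (real \<Rightarrow> 'a::real_normed_vector) \<Rightarrow> bool" where
  "abs_cont_on a b f \<longleftrightarrow>
     (\<forall>\<epsilon>>0. \<exists>\<delta>>0. \<forall>(N::nat) (s::nat \<Rightarrow> real) (e::nat \<Rightarrow> real).
        (\<forall>k<N. s k \<le> e k \<and> {s k..e k} \<subseteq> {a..b}) \<and>
        (\<forall>k<N. \<forall>k'<N. k \<noteq> k' \<longrightarrow> {s k<..<e k} \<inter> {s k'<..<e k'} = {}) \<and>
        (\<Sum>k<N. e k - s k) < \<delta>
        \<longrightarrow> (\<Sum>k<N. norm (f (e k) - f (s k))) < \<epsilon>)"

definition krasovskii_set :: "('x::real_normed_vector \<Rightarrow> 'b::real_normed_vector) \<Rightarrow> 'x \<Rightarrow> 'b set" where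
  "krasovskii_set u x = (\<Inter>\<delta>\<in>{0<..}. closure (convex hull (u ` cball x \<delta>)))"

definition krasovskii_solution ::
  "(real \<times> 'n::euclidean_space \<Rightarrow> 'n) \<Rightarrow> real \<Rightarrow> 'n \<Rightarrow> (real \<Rightarrow> 'n) \<Rightarrow> bool" where
  "krasovskii_solution u t0 q0 q \<longleftrightarrow>
     (\<forall>a b. t0 \<le> a \<and> a \<le> b \<longrightarrow> abs_cont_on a b q) \<and>
     q t0 = q0 \<and>
     (\<exists>N. N \<in> null_sets lebesgue \<and>
        (\<forall>t. t > t0 \<and> t \<notin> N \<longrightarrow>
           (\<exists>d. (q has_vector_derivative d) (at t) \<and> d \<in> krasovskii_set u (t, q t))))"

text \<open>Task sizes ms = [m_1,...,m_l]; row index i < m belongs to task blk ms i (0-based).\<close>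
definition blk :: "nat list \<Rightarrow> nat \<Rightarrow> nat" where
  "blk ms i = (LEAST a. i < sum_list (take (Suc a) ms))"

text \<open>Rows j i (i < m). The list gs_rows j i contains the normalized vectors
  \<open>hat j_0, ..., hat j_(i-1)\<close>, where a row with c_kk = 0 is recorded as 0
  (such rows never contribute).\<close>
primrec gs_rows :: "(nat \<Rightarrow> 'n::euclidean_space) \<Rightarrow> nat \<Rightarrow> 'n list" where
  "gs_rows j 0 = []"
| "gs_rows j (Suc i) =
     (let hs = gs_rows j i;
          v = j i - sum_list (map (\<lambda>h. (h \<bullet> j i) *\<^sub>R h) hs)
      in hs @ [if norm v > 0 then v /\<^sub>R norm v else 0])"

definition gs_hat :: "(nat \<Rightarrow> 'n::euclidean_space) \<Rightarrow> nat \<Rightarrow> 'n" where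
  "gs_hat j i = gs_rows j (Suc i) ! i"

definition gs_v :: "(nat \<Rightarrow> 'n::euclidean_space) \<Rightarrow> nat \<Rightarrow> 'n" where
  "gs_v j i = j i - (\<Sum>k<i. (gs_hat j k \<bullet> j i) *\<^sub>R gs_hat j k)"

definition gs_c :: "(nat \<Rightarrow> 'n::euclidean_space) \<Rightarrow> nat \<Rightarrow> nat \<Rightarrow> real" where
  "gs_c j i k =
     (if k = i then norm (gs_v j i)
      else if k < i \<and> norm (gs_v j k) > 0 then gs_hat j k \<bullet> j i
      else 0)"

definition gs_cD :: "nat list \<Rightarrow> (nat \<Rightarrow> 'n::euclidean_space) \<Rightarrow> nat \<Rightarrow> nat \<Rightarrow> real" where
  "gs_cD ms j i k = (if blk ms i = blk ms k then gs_c j i k else 0)"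

text \<open>Fq x i is the i-th row of F_q(x); J = F_q R^{-1}, row-wise.\<close>
definition Jrows :: "(real \<times> (real^'n) \<Rightarrow> nat \<Rightarrow> real^'n) \<Rightarrow> (real \<times> (real^'n) \<Rightarrow> real^'n^'n)
                      \<Rightarrow> real \<times> (real^'n) \<Rightarrow> nat \<Rightarrow> real^'n" where
  "Jrows Fq R x i = Fq x i v* matrix_inv (R x)"

text \<open>u = R^{-1} hat J^T C_D^T L r' with r' = r - f_t.\<close>
definition pik_u ::
  "nat list \<Rightarrow> (real \<times> (real^'n) \<Rightarrow> nat \<Rightarrow> real) \<Rightarrow> (real \<times> (real^'n) \<Rightarrow> nat \<Rightarrow> real^'n)
   \<Rightarrow> (real \<times> (real^'n) \<Rightarrow> real^'n^'n) \<Rightarrow> (real \<times> (real^'n) \<Rightarrow> nat \<Rightarrow> real)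
   \<Rightarrow> (real \<times> (real^'n) \<Rightarrow> nat \<Rightarrow> nat \<Rightarrow> real) \<Rightarrow> real \<times> (real^'n) \<Rightarrow> real^'n" where
  "pik_u ms ft Fq R r L x =
     (let m = sum_list ms;
          j = Jrows Fq R x;
          r' = (\<lambda>i. r x i - ft x i);
          w = (\<lambda>i. \<Sum>k<m. L x i k * r' k);
          z = (\<lambda>k. \<Sum>i<m. gs_cD ms j i k * w i)
      in matrix_inv (R x) *v (\<Sum>k<m. z k *\<^sub>R gs_hat j k))"

end

theory Submission
  imports Defs "HOL-Library.Diagonal_Subsequence"
begin

lemma em_leb: "A \<in> sets borel \<Longrightarrow> emeasure lebesgue A = emeasure lborel A"
  by simp

lemma nu_union_le:
  fixes \<nu> :: "real measure" and B :: "'i \<Rightarrow> real set"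
  assumes sets: "sets \<nu> = sets borel" and C: "countable C"
    and Bb: "\<And>i. i\<in>C \<Longrightarrow> B i \<in> sets borel"
    and dj: "disjoint_family_on B C"
    and le: "\<And>i. i\<in>C \<Longrightarrow> emeasure \<nu> (B i) \<le> ennreal p * emeasure lborel (B i)"
  shows "emeasure \<nu> (\<Union>(B ` C)) \<le> ennreal p * emeasure lborel (\<Union>(B ` C))"
proof -
  have "emeasure \<nu> (\<Union>(B ` C)) = (\<integral>\<^sup>+ i. emeasure \<nu> (B i) \<partial>count_space C)"
    by (rule emeasure_UN_countable) (use assms in auto)
  also have "\<dots> \<le> (\<integral>\<^sup>+ i. ennreal p * emeasure lborel (B i) \<partial>count_space C)"
    by (rule nn_integral_mono) (use le in auto)
  also have "\<dots> = ennreal p * (\<integral>\<^sup>+ i. emeasure lborel (B i) \<partial>count_space C)"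
    by (rule nn_integral_cmult) auto
  also have "\<dots> = ennreal p * emeasure lborel (\<Union>(B ` C))"
    using emeasure_UN_countable[of C B lborel] assms by auto
  finally show ?thesis .
qed

lemma nu_union_ge:
  fixes \<nu> :: "real measure" and B :: "'i \<Rightarrow> real set"
  assumes sets: "sets \<nu> = sets borel" and C: "countable C"
    and Bb: "\<And>i. i\<in>C \<Longrightarrow> B i \<in> sets borel"
    and dj: "disjoint_family_on B C"
    and le: "\<And>i. i\<in>C \<Longrightarrow> ennreal p * emeasure lborel (B i) \<le> emeasure \<nu> (B i)"
  shows "ennreal p * emeasure lborel (\<Union>(B ` C)) \<le> emeasure \<nu> (\<Union>(B ` C))"
proof -
  have "ennreal p * emeasure lborel (\<Union>(B ` C)) = ennreal p * (\<integral>\<^sup>+ i. emeasure lborel (B i) \<partial>count_space C)"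
    using emeasure_UN_countable[of C B lborel] assms by auto
  also have "\<dots> = (\<integral>\<^sup>+ i. ennreal p * emeasure lborel (B i) \<partial>count_space C)"
    by (rule nn_integral_cmult[symmetric]) auto
  also have "\<dots> \<le> (\<integral>\<^sup>+ i. emeasure \<nu> (B i) \<partial>count_space C)"
    by (rule nn_integral_mono) (use le in auto)
  also have "\<dots> = emeasure \<nu> (\<Union>(B ` C))"
    by (rule emeasure_UN_countable[symmetric]) (use assms in auto)
  finally show ?thesis .
qed

lemma KL:
  fixes g :: "real \<Rightarrow> real"
  assumes mono: "\<And>x y. x \<le> y \<Longrightarrow> g x \<le> g y" and cont: "continuous_on UNIV g"
    and p: "0 \<le> p" "p < r"
  shows "negligible {x. (\<forall>\<delta>>0. \<exists>h. 0<h \<and> h<\<delta> \<and> g x - g (x-h) < p*h) \<and>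
                        (\<forall>\<delta>>0. \<exists>h. 0<h \<and> h<\<delta> \<and> r*h < g (x+h) - g x)}"
    (is "negligible ?E")
proof -
  define \<nu> where "\<nu> = interval_measure g"
  have nu_Icc: "emeasure \<nu> {a..b} = ennreal (g b - g a)" if "a \<le> b" for a b
    using emeasure_interval_measure_Icc[OF that mono cont] by (simp add: \<nu>_def)
  have sets_nu: "sets \<nu> = sets borel" by (simp add: \<nu>_def)
  have lb_Icc: "emeasure lborel (cball c \<rho>) = ennreal (2*\<rho>)" if "0 \<le> \<rho>" for c \<rho> :: real
    using that by (simp add: cball_eq_atLeastAtMost)
  have nu_cball: "emeasure \<nu> (cball c \<rho>) = ennreal (g (c+\<rho>) - g (c-\<rho>))" if "0 \<le> \<rho>" for c \<rho> :: real
    using that nu_Icc[of "c-\<rho>" "c+\<rho>"] by (simp add: cball_eq_atLeastAtMost)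
  define E where "E = ?E"
  have EL: "\<exists>h. 0<h \<and> h<\<delta> \<and> g x - g (x-h) < p*h" if "x \<in> E" "\<delta> > 0" for x \<delta>
    using that unfolding E_def by blast
  have ER: "\<exists>h. 0<h \<and> h<\<delta> \<and> r*h < g (x+h) - g x" if "x \<in> E" "\<delta> > 0" for x \<delta>
    using that unfolding E_def by blast
  have "negligible (E \<inter> ball 0 (real n))" for n
  proof -
    define S where "S = E \<inter> ball 0 (real n)"
    define M where "M = {measure lebesgue U | U. S \<subseteq> U \<and> U \<in> lmeasurable}"
    define \<mu> where "\<mu> = Inf M"
    have Sb: "S \<subseteq> ball 0 n" unfolding S_def by (rule Int_lower2)
    have ne: "M \<noteq> {}" using Sb lmeasurable_ball[of 0 "real n"] unfolding M_def by blast
    have bdd: "bdd_below M" unfolding M_def by (rule bdd_belowI[of _ 0]) auto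
    have mu_le: "\<mu> \<le> measure lebesgue U" if "S \<subseteq> U" "U \<in> lmeasurable" for U
      unfolding \<mu>_def by (rule cInf_lower) (use that bdd in \<open>auto simp: M_def\<close>)
    have mu_ge0: "0 \<le> \<mu>" unfolding \<mu>_def by (rule cInf_greatest[OF ne]) (auto simp: M_def)
    have main: "r * \<mu> \<le> p * (\<mu> + \<epsilon>)" if eps: "\<epsilon> > 0" for \<epsilon>
    proof -
      obtain U0 where U0: "S \<subseteq> U0" "U0 \<in> lmeasurable" "measure lebesgue U0 < \<mu> + \<epsilon>/2"
      proof -
        have "\<mu> < \<mu> + \<epsilon>/2" using eps by simp
        then obtain x where "x \<in> M" "x < \<mu> + \<epsilon>/2" using cInf_lessD[OF ne] unfolding \<mu>_def by blast
        then show ?thesis using that unfolding M_def by blast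
      qed
      obtain T where T: "open T" "U0 \<subseteq> T" "(T - U0) \<in> lmeasurable" "emeasure lebesgue (T - U0) < ennreal (\<epsilon>/2)"
        using sets_lebesgue_outer_open[of U0 "\<epsilon>/2"] U0 eps by (auto simp: fmeasurable_def)
      define Op where "Op = T \<inter> ball 0 n"
      have Ob: "Op \<subseteq> ball 0 n" unfolding Op_def by (rule Int_lower2)
      have Op: "open Op" "S \<subseteq> Op" "Op \<in> lmeasurable"
        using T U0 Sb unfolding Op_def by (auto intro!: lmeasurable_open)
      have mOp: "measure lebesgue Op \<le> \<mu> + \<epsilon>"
      proof -
        have mT: "measure lebesgue (T - U0) < \<epsilon>/2"
          using T(3,4) eps by (simp add: emeasure_eq_measure2 ennreal_less_iff)
        have "Op \<subseteq> U0 \<union> (T - U0)" unfolding Op_def by blast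
        then have "measure lebesgue Op \<le> measure lebesgue (U0 \<union> (T - U0))"
          by (intro measure_mono_fmeasurable fmeasurable.Un fmeasurableD Op U0 T)
        also have "\<dots> \<le> measure lebesgue U0 + measure lebesgue (T - U0)"
          by (rule measure_Un_le) (use U0 T in \<open>auto simp: fmeasurable_def\<close>)
        finally show ?thesis using U0 mT by linarith
      qed
      define K1 where "K1 = {(c,\<rho>). 0 < \<rho> \<and> cball c \<rho> \<subseteq> Op \<and> c + \<rho> \<in> S \<and> g (c+\<rho>) - g (c-\<rho>) < p*(2*\<rho>)}"
      obtain C1 where C1: "countable C1" "C1 \<subseteq> K1"
        "pairwise (\<lambda>i j. disjnt (cball (fst i) (snd i)) (cball (fst j) (snd j))) C1"
        "negligible (S - (\<Union>i\<in>C1. cball (fst i) (snd i)))"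
      proof (rule Vitali_covering_theorem_cballs[of K1 snd S fst])
        show "\<And>i. i \<in> K1 \<Longrightarrow> 0 < snd i" by (auto simp: K1_def)
        fix x d :: real assume x: "x \<in> S" and d: "0 < d"
        obtain e where e: "e > 0" "ball x e \<subseteq> Op" using Op x open_contains_ball by blast
        have xE: "x \<in> E" using x unfolding S_def by blast
        obtain h where h: "0<h" "h < min d e" "g x - g (x-h) < p*h"
          using EL[OF xE, of "min d e"] d e by auto
        show "\<exists>i. i \<in> K1 \<and> x \<in> cball (fst i) (snd i) \<and> snd i < d"
        proof (intro exI conjI)
          have "cball (x - h/2) (h/2) \<subseteq> ball x e"
            using h by (auto simp: cball_eq_atLeastAtMost dist_real_def)
          then show "(x - h/2, h/2) \<in> K1" using h e x unfolding K1_def by auto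
        qed (use h in \<open>auto simp: dist_real_def\<close>)
      qed blast
      define I where "I = (\<lambda>i::real\<times>real. cball (fst i) (snd i))"
      have C1K: "0 < snd i \<and> I i \<subseteq> Op \<and> g (fst i + snd i) - g (fst i - snd i) < p*(2 * snd i)"
        if "i \<in> C1" for i
      proof -
        have "i \<in> K1" using C1(2) that by blast
        then show ?thesis unfolding K1_def I_def by (cases i) auto
      qed
      have djI: "disjoint_family_on I C1"
        using C1(3) unfolding disjoint_family_on_def pairwise_def disjnt_def I_def by blast
      have UIb: "\<Union>(I ` C1) \<in> sets borel"
        by (rule sets.countable_UN'') (use C1 in \<open>auto simp: I_def\<close>)
      have bound1: "emeasure \<nu> (\<Union>(I ` C1)) \<le> ennreal p * emeasure lborel (\<Union>(I ` C1))"
      proof (rule nu_union_le[OF sets_nu C1(1) _ djI])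
        show "I i \<in> sets borel" for i by (simp add: I_def)
        fix i assume i: "i \<in> C1"
        have "emeasure \<nu> (I i) = ennreal (g (fst i + snd i) - g (fst i - snd i))"
          using C1K[OF i] by (simp add: I_def nu_cball)
        also have "\<dots> \<le> ennreal (p * (2 * snd i))" using C1K[OF i] by (intro ennreal_leI) simp
        also have "\<dots> = ennreal p * emeasure lborel (I i)"
          using C1K[OF i] p by (simp add: I_def lb_Icc ennreal_mult)
        finally show "emeasure \<nu> (I i) \<le> ennreal p * emeasure lborel (I i)" .
      qed
      define W where "W = (\<Union>i\<in>C1. ball (fst i) (snd i))"
      have W: "open W" "W \<subseteq> \<Union>(I ` C1)" unfolding W_def I_def by auto
      define K2 where "K2 = {(c,\<rho>). 0 < \<rho> \<and> cball c \<rho> \<subseteq> W \<and> r*(2*\<rho>) < g (c+\<rho>) - g (c-\<rho>)}"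
      obtain C2 where C2: "countable C2" "C2 \<subseteq> K2"
        "pairwise (\<lambda>i j. disjnt (cball (fst i) (snd i)) (cball (fst j) (snd j))) C2"
        "negligible ((S \<inter> W) - (\<Union>i\<in>C2. cball (fst i) (snd i)))"
      proof (rule Vitali_covering_theorem_cballs[of K2 snd "S \<inter> W" fst])
        show "\<And>i. i \<in> K2 \<Longrightarrow> 0 < snd i" by (auto simp: K2_def)
        fix x d :: real assume x: "x \<in> S \<inter> W" and d: "0 < d"
        obtain e where e: "e > 0" "ball x e \<subseteq> W" using W x open_contains_ball by blast
        have xE: "x \<in> E" using x unfolding S_def by blast
        obtain h where h: "0<h" "h < min d e" "r*h < g (x+h) - g x"
          using ER[OF xE, of "min d e"] d e by auto
        show "\<exists>i. i \<in> K2 \<and> x \<in> cball (fst i) (snd i) \<and> snd i < d"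
        proof (intro exI conjI)
          have "cball (x + h/2) (h/2) \<subseteq> ball x e"
            using h by (auto simp: cball_eq_atLeastAtMost dist_real_def)
          then show "(x + h/2, h/2) \<in> K2" using h e x unfolding K2_def by (auto simp: add.commute)
        qed (use h in \<open>auto simp: dist_real_def\<close>)
      qed blast
      have C2K: "0 < snd i \<and> I i \<subseteq> W \<and> r*(2 * snd i) < g (fst i + snd i) - g (fst i - snd i)"
        if "i \<in> C2" for i
      proof -
        have "i \<in> K2" using C2(2) that by blast
        then show ?thesis unfolding K2_def I_def by (cases i) auto
      qed
      have djJ: "disjoint_family_on I C2"
        using C2(3) unfolding disjoint_family_on_def pairwise_def disjnt_def I_def by blast
      have UJb: "\<Union>(I ` C2) \<in> sets borel"
        by (rule sets.countable_UN'') (use C2 in \<open>auto simp: I_def\<close>)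
      have bound2: "ennreal r * emeasure lborel (\<Union>(I ` C2)) \<le> emeasure \<nu> (\<Union>(I ` C2))"
      proof (rule nu_union_ge[OF sets_nu C2(1) _ djJ])
        show "I i \<in> sets borel" for i by (simp add: I_def)
        fix i assume i: "i \<in> C2"
        have "ennreal r * emeasure lborel (I i) = ennreal (r * (2 * snd i))"
          using C2K[OF i] p by (simp add: I_def lb_Icc ennreal_mult)
        also have "\<dots> \<le> ennreal (g (fst i + snd i) - g (fst i - snd i))"
          using C2K[OF i] by (intro ennreal_leI) simp
        also have "\<dots> = emeasure \<nu> (I i)"
          using C2K[OF i] by (simp add: I_def nu_cball)
        finally show "ennreal r * emeasure lborel (I i) \<le> emeasure \<nu> (I i)" .
      qed
      have JW: "\<Union>(I ` C2) \<subseteq> W" using C2K by blast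
      have IOp: "\<Union>(I ` C1) \<subseteq> Op" using C1K by blast
      have nuJI: "emeasure \<nu> (\<Union>(I ` C2)) \<le> emeasure \<nu> (\<Union>(I ` C1))"
        by (rule emeasure_mono) (use JW W UIb sets_nu in auto)
      have lbIOp: "emeasure lborel (\<Union>(I ` C1)) \<le> emeasure lborel Op"
        by (rule emeasure_mono) (use IOp Op in auto)
      have OpE: "emeasure lborel Op = ennreal (measure lebesgue Op)"
        using Op em_leb[of Op] by (simp add: emeasure_eq_measure2 borel_open)
      have Jlm: "\<Union>(I ` C2) \<in> lmeasurable"
      proof (rule bounded_set_imp_lmeasurable)
        show "bounded (\<Union>(I ` C2))" using JW W IOp Ob by (meson bounded_ball bounded_subset order_trans)
        show "\<Union>(I ` C2) \<in> sets lebesgue" using UJb by simp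
      qed
      have JE: "emeasure lborel (\<Union>(I ` C2)) = ennreal (measure lebesgue (\<Union>(I ` C2)))"
        using Jlm em_leb[OF UJb] by (simp add: emeasure_eq_measure2)
      have "ennreal r * ennreal (measure lebesgue (\<Union>(I ` C2))) \<le> ennreal p * ennreal (measure lebesgue Op)"
      proof -
        have "ennreal r * ennreal (measure lebesgue (\<Union>(I ` C2))) \<le> emeasure \<nu> (\<Union>(I ` C1))"
          using bound2 nuJI JE by simp
        also have "\<dots> \<le> ennreal p * emeasure lborel (\<Union>(I ` C1))" by (rule bound1)
        also have "\<dots> \<le> ennreal p * ennreal (measure lebesgue Op)"
          using lbIOp OpE by (simp add: mult_left_mono)
        finally show ?thesis .
      qed
      then have rJ: "r * measure lebesgue (\<Union>(I ` C2)) \<le> p * measure lebesgue Op"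
        using p by (simp add: ennreal_mult[symmetric] ennreal_le_iff)
      define E1 where "E1 = (\<lambda>i. fst i - snd i) ` C1 \<union> (\<lambda>i. fst i + snd i) ` C1"
      have nE1: "negligible E1"
      proof -
        have "E1 = \<Union>((\<lambda>x. {x}) ` E1)" by blast
        moreover have "countable E1" using C1(1) unfolding E1_def by (intro countable_Un countable_image)
        moreover have "negligible (\<Union>((\<lambda>x. {x}) ` E1))"
          by (rule negligible_countable_Union) (use \<open>countable E1\<close> in auto)
        ultimately show ?thesis by simp
      qed
      define N where "N = (S - \<Union>(I ` C1)) \<union> E1 \<union> ((S \<inter> W) - \<Union>(I ` C2))"
      have nN: "negligible N" unfolding N_def using C1(4) C2(4) nE1 by (simp add: I_def)
      have SJN: "S \<subseteq> \<Union>(I ` C2) \<union> N"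
      proof
        fix x assume x: "x \<in> S"
        show "x \<in> \<Union>(I ` C2) \<union> N"
        proof (cases "x \<in> \<Union>(I ` C1)")
          case False then show ?thesis using x by (auto simp: N_def)
        next
          case True
          then obtain i where i: "i \<in> C1" "x \<in> I i" by blast
          show ?thesis
          proof (cases "x \<in> ball (fst i) (snd i)")
            case True
            then have "x \<in> W" using i unfolding W_def by blast
            then show ?thesis using x by (auto simp: N_def)
          next
            case False
            then have "x = fst i - snd i \<or> x = fst i + snd i"
              using i unfolding I_def by (auto simp: dist_real_def)
            then have "x \<in> E1" using i unfolding E1_def by blast
            then show ?thesis by (auto simp: N_def)
          qed
        qed
      qed
      have Nsub: "N \<subseteq> ball 0 n"
      proof -
        have "E1 \<subseteq> \<Union>(I ` C1)"
        proof
          fix x assume "x \<in> E1"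
          then obtain i where "i \<in> C1" "x = fst i - snd i \<or> x = fst i + snd i" unfolding E1_def by blast
          then have "x \<in> I i" using C1K[of i] unfolding I_def by (auto simp: dist_real_def)
          then show "x \<in> \<Union>(I ` C1)" using \<open>i \<in> C1\<close> by blast
        qed
        then show ?thesis using Sb IOp Ob unfolding N_def by blast
      qed
      define U' where "U' = \<Union>(I ` C2) \<union> N"
      have U'lm: "U' \<in> lmeasurable"
        unfolding U'_def using Jlm nN Nsub
        by (meson bounded_ball bounded_set_imp_lmeasurable bounded_subset fmeasurable.Un negligible_imp_sets)
      have "measure lebesgue U' \<le> measure lebesgue (\<Union>(I ` C2)) + measure lebesgue N"
        unfolding U'_def by (rule measure_Un_le) (use Jlm nN in \<open>auto simp: fmeasurable_def negligible_imp_sets\<close>)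
      then have mU': "measure lebesgue U' \<le> measure lebesgue (\<Union>(I ` C2))"
        using nN by (simp add: negligible_imp_measure0)
      have "\<mu> \<le> measure lebesgue (\<Union>(I ` C2))"
        using mu_le[of U'] SJN U'lm mU' unfolding U'_def by linarith
      then have "r * \<mu> \<le> r * measure lebesgue (\<Union>(I ` C2))" using p by (simp add: mult_left_mono)
      also have "\<dots> \<le> p * measure lebesgue Op" by (rule rJ)
      also have "\<dots> \<le> p * (\<mu> + \<epsilon>)" using mOp p by (simp add: mult_left_mono)
      finally show ?thesis .
    qed
    have mu0: "\<mu> = 0"
    proof (rule ccontr)
      assume "\<mu> \<noteq> 0"
      then have mp: "\<mu> > 0" using mu_ge0 by simp
      define \<epsilon> where "\<epsilon> = (r - p) * \<mu> / (2 * (p + 1))"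
      have e0: "\<epsilon> > 0" using mp p unfolding \<epsilon>_def by (simp add: field_simps)
      have "p * \<epsilon> < (r - p) * \<mu>"
      proof -
        have "p * \<epsilon> = ((r - p) * \<mu>) * (p / (2 * (p + 1)))" unfolding \<epsilon>_def using p by (simp add: field_simps)
        also have "\<dots> < ((r - p) * \<mu>) * 1"
          using mp p by (intro mult_strict_left_mono) (auto simp: field_simps)
        finally show ?thesis by simp
      qed
      with main[OF e0] show False by (simp add: algebra_simps)
    qed
    show "negligible (E \<inter> ball 0 (real n))"
      unfolding negligible_outer
    proof (intro allI impI)
      fix e :: real assume e: "e > 0"
      then obtain x where "x \<in> M" "x < e" using cInf_lessD[OF ne, of e] mu0 unfolding \<mu>_def by auto
      then show "\<exists>T. E \<inter> ball 0 (real n) \<subseteq> T \<and> T \<in> lmeasurable \<and> measure lebesgue T < e"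
        unfolding M_def S_def by blast
    qed
  qed
  have "E = \<Union>(range (\<lambda>n. E \<inter> ball 0 (real n)))"
  proof -
    have "\<exists>n. x \<in> ball 0 (real n)" for x :: real
      using reals_Archimedean2[of "\<bar>x\<bar>"] by (auto simp: dist_real_def)
    then show ?thesis by blast
  qed
  moreover have "negligible (\<Union>(range (\<lambda>n. E \<inter> ball 0 (real n))))"
    by (rule negligible_countable_Union) (use \<open>\<And>n. negligible (E \<inter> ball 0 (real n))\<close> in auto)
  ultimately show ?thesis unfolding E_def by simp
qed

definition Eset :: "(real \<Rightarrow> real) \<Rightarrow> real \<Rightarrow> real \<Rightarrow> real set" where
  "Eset g p r = {x. (\<forall>\<delta>>0. \<exists>h. 0<h \<and> h<\<delta> \<and> g x - g (x-h) < p*h) \<and>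
                        (\<forall>\<delta>>0. \<exists>h. 0<h \<and> h<\<delta> \<and> r*h < g (x+h) - g x)}"

lemma negl_Eset:
  fixes g :: "real \<Rightarrow> real"
  assumes mono: "\<And>x y. x \<le> y \<Longrightarrow> g x \<le> g y" and cont: "continuous_on UNIV g"
    and p: "0 \<le> p" "p < r"
  shows "negligible (Eset g p r)"
  unfolding Eset_def by (rule KL[OF assms])

lemma negl_uminus: assumes "negligible (S::real set)" shows "negligible (uminus ` S)"
  by (rule negligible_differentiable_image_negligible[OF _ assms]) (simp_all add: differentiable_on_minus)

lemma H_right_lt:
  fixes f :: "real \<Rightarrow> real"
  assumes "Liminf (at_right 0) (\<lambda>h. ereal (f h)) < ereal p" "\<delta> > 0"
  shows "\<exists>h. 0<h \<and> h<\<delta> \<and> f h < p"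
proof (rule ccontr)
  assume "\<not> ?thesis"
  then have "eventually (\<lambda>h. ereal p \<le> ereal (f h)) (at_right 0)"
    unfolding eventually_at_right_field using assms(2) by (intro exI[of _ \<delta>]) auto
  then have "ereal p \<le> Liminf (at_right 0) (\<lambda>h. ereal (f h))" by (rule Liminf_bounded)
  with assms(1) show False by simp
qed

lemma H_right_gt:
  fixes f :: "real \<Rightarrow> real"
  assumes "ereal r < Limsup (at_right 0) (\<lambda>h. ereal (f h))" "\<delta> > 0"
  shows "\<exists>h. 0<h \<and> h<\<delta> \<and> r < f h"
proof (rule ccontr)
  assume "\<not> ?thesis"
  then have "eventually (\<lambda>h. ereal (f h) \<le> ereal r) (at_right 0)"
    unfolding eventually_at_right_field using assms(2) by (intro exI[of _ \<delta>]) auto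
  then have "Limsup (at_right 0) (\<lambda>h. ereal (f h)) \<le> ereal r" by (rule Limsup_bounded)
  with assms(1) show False by simp
qed

lemma H_left_lt:
  fixes f :: "real \<Rightarrow> real"
  assumes "Liminf (at_left 0) (\<lambda>h. ereal (f h)) < ereal p" "\<delta> > 0"
  shows "\<exists>h. 0<h \<and> h<\<delta> \<and> f (-h) < p"
proof (rule ccontr)
  assume a: "\<not> ?thesis"
  have "eventually (\<lambda>h. ereal p \<le> ereal (f h)) (at_left 0)"
    unfolding eventually_at_left_field
  proof (intro exI[of _ "-\<delta>"] conjI allI impI)
    fix y :: real assume "- \<delta> < y" "y < 0"
    then show "ereal p \<le> ereal (f y)" using a by (auto dest: spec[of _ "-y"])
  qed (use assms(2) in auto)
  then have "ereal p \<le> Liminf (at_left 0) (\<lambda>h. ereal (f h))" by (rule Liminf_bounded)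
  with assms(1) show False by simp
qed

lemma H_left_gt:
  fixes f :: "real \<Rightarrow> real"
  assumes "ereal r < Limsup (at_left 0) (\<lambda>h. ereal (f h))" "\<delta> > 0"
  shows "\<exists>h. 0<h \<and> h<\<delta> \<and> r < f (-h)"
proof (rule ccontr)
  assume a: "\<not> ?thesis"
  have "eventually (\<lambda>h. ereal (f h) \<le> ereal r) (at_left 0)"
    unfolding eventually_at_left_field
  proof (intro exI[of _ "-\<delta>"] conjI allI impI)
    fix y :: real assume "- \<delta> < y" "y < 0"
    then show "ereal (f y) \<le> ereal r" using a by (auto dest: spec[of _ "-y"])
  qed (use assms(2) in auto)
  then have "Limsup (at_left 0) (\<lambda>h. ereal (f h)) \<le> ereal r" by (rule Limsup_bounded)
  with assms(1) show False by simp
qed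

lemma ereal_rat_between:
  fixes a b :: ereal
  assumes "a < b" "0 \<le> a"
  obtains p r where "p \<in> \<rat>" "r \<in> \<rat>" "0 \<le> p" "p < r" "a < ereal p" "ereal r < b"
proof -
  obtain z1 where z1: "a < ereal z1" "ereal z1 < b" using ereal_dense2[OF assms(1)] by blast
  obtain z2 where z2: "ereal z1 < ereal z2" "ereal z2 < b" using ereal_dense2[OF z1(2)] by blast
  have "z1 < z2" using z2 by simp
  have m1: "z1 < (z1+z2)/2" "(z1+z2)/2 < z2" using \<open>z1 < z2\<close> by simp_all
  obtain p where p: "p \<in> \<rat>" "z1 < p" "p < (z1+z2)/2" using Rats_dense_in_real[OF m1(1)] by blast
  obtain r where r: "r \<in> \<rat>" "(z1+z2)/2 < r" "r < z2" using Rats_dense_in_real[OF m1(2)] by blast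
  have "(0::ereal) < ereal z1" using assms(2) z1(1) by (rule le_less_trans)
  then have "0 \<le> z1" by simp
  show ?thesis
  proof (rule that[OF p(1) r(1)])
    show "0 \<le> p" using p(2) \<open>0 \<le> z1\<close> by linarith
    show "p < r" using p(3) r(2) by linarith
    have "ereal z1 < ereal p" using p(2) by simp
    then show "a < ereal p" using z1(1) by (rule less_trans[rotated])
    have "ereal r < ereal z2" using r(3) by simp
    then show "ereal r < b" using z2(2) by (rule less_trans)
  qed
qed

lemma mono_lip_deriv_ae:
  fixes g :: "real \<Rightarrow> real"
  assumes mono: "\<And>x y. x \<le> y \<Longrightarrow> g x \<le> g y" and lip: "\<And>x y. x \<le> y \<Longrightarrow> g y - g x \<le> L * (y - x)"
    and L: "0 \<le> L"
  shows "negligible {x. \<not> (\<exists>D. (g has_real_derivative D) (at x))}"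
proof -
  have ab: "\<bar>g y - g x\<bar> \<le> L * \<bar>y - x\<bar>" for x y
  proof (cases "x \<le> y")
    case True then show ?thesis using mono[OF True] lip[OF True] by simp
  next
    case False then have "y \<le> x" by simp
    then show ?thesis using mono[OF \<open>y \<le> x\<close>] lip[OF \<open>y \<le> x\<close>] by simp
  qed
  have cont: "continuous_on UNIV g"
    unfolding continuous_on_iff
  proof (intro ballI allI impI)
    fix x e :: real assume "0 < e"
    show "\<exists>d>0. \<forall>x'\<in>UNIV. dist x' x < d \<longrightarrow> dist (g x') (g x) < e"
    proof (intro exI[of _ "e/(L+1)"] conjI ballI impI)
      show "0 < e/(L+1)" using \<open>0<e\<close> L by simp
      fix x' assume "dist x' x < e/(L+1)"
      then have "(L+1) * \<bar>x' - x\<bar> < e" using L by (simp add: dist_real_def field_simps)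
      moreover have "\<bar>g x' - g x\<bar> \<le> L * \<bar>x' - x\<bar>" by (rule ab)
      moreover have "L * \<bar>x' - x\<bar> \<le> (L+1) * \<bar>x' - x\<bar>" by (simp add: mult_right_mono)
      ultimately show "dist (g x') (g x) < e" by (simp add: dist_real_def)
    qed
  qed
  define g' where "g' = (\<lambda>x. - g (- x))"
  have mono': "\<And>x y. x \<le> y \<Longrightarrow> g' x \<le> g' y" unfolding g'_def using mono by simp
  have cont': "continuous_on UNIV g'" unfolding g'_def
    by (intro continuous_intros continuous_on_compose2[OF cont]) auto
  define Q where "Q = {(p::real,r::real). p \<in> \<rat> \<and> r \<in> \<rat> \<and> 0 \<le> p \<and> p < r}"
  have cQ: "countable Q"
  proof -
    have "Q \<subseteq> \<rat> \<times> \<rat>" unfolding Q_def by blast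
    then show ?thesis using countable_rat by (meson countable_SIGMA countable_subset)
  qed
  define F where "F = (\<lambda>(p,r). Eset g p r \<union> uminus ` Eset g' p r) ` Q"
  have nF: "negligible (\<Union>F)"
  proof (rule negligible_countable_Union)
    show "countable F" unfolding F_def using cQ by simp
    fix S assume "S \<in> F"
    then obtain p r where pr: "(p,r) \<in> Q" "S = Eset g p r \<union> uminus ` Eset g' p r" unfolding F_def by auto
    then have "0 \<le> p" "p < r" unfolding Q_def by blast+
    then show "negligible S" unfolding pr(2)
      using negl_Eset[OF mono cont] negl_Eset[OF mono' cont'] negl_uminus by auto
  qed
  have "{x. \<not> (\<exists>D. (g has_real_derivative D) (at x))} \<subseteq> \<Union>F"
  proof
    fix x assume x: "x \<in> {x. \<not> (\<exists>D. (g has_real_derivative D) (at x))}"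
    show "x \<in> \<Union>F"
    proof (rule ccontr)
      assume nF: "x \<notin> \<Union>F"
      define q where "q = (\<lambda>h. (g (x + h) - g x) / h)"
      have q0: "0 \<le> q h" for h
      proof -
        consider "h > 0" | "h = 0" | "h < 0" by linarith
        then show ?thesis
        proof cases
          case 1 then show ?thesis using mono[of x "x+h"] unfolding q_def by simp
        next
          case 2 then show ?thesis unfolding q_def by simp
        next
          case 3 then show ?thesis using mono[of "x+h" x] unfolding q_def
            by (intro divide_nonpos_neg) auto
        qed
      qed
      have qL: "q h \<le> L" for h
      proof -
        consider "h > 0" | "h = 0" | "h < 0" by linarith
        then show ?thesis
        proof cases
          case 1 then show ?thesis using lip[of x "x+h"] unfolding q_def by (simp add: pos_divide_le_eq)
        next
          case 2 then show ?thesis unfolding q_def using L by simp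
        next
          case 3
          have "q h = (g x - g (x+h)) / (-h)" unfolding q_def
            by (metis divide_minus_right minus_diff_eq minus_divide_left)
          also have "\<dots> \<le> L"
          proof -
            have hp: "0 < -h" using 3 by simp
            show ?thesis by (simp only: pos_divide_le_eq[OF hp]) (use lip[of "x+h" x] 3 in \<open>simp add: algebra_simps\<close>)
          qed
          finally show ?thesis .
        qed
      qed
      define Lr where "Lr = Limsup (at_right 0) (\<lambda>h. ereal (q h))"
      define lr where "lr = Liminf (at_right 0) (\<lambda>h. ereal (q h))"
      define Ll where "Ll = Limsup (at_left 0) (\<lambda>h. ereal (q h))"
      define ll where "ll = Liminf (at_left 0) (\<lambda>h. ereal (q h))"
      have ll0: "0 \<le> ll" unfolding ll_def by (rule Liminf_bounded) (use q0 in auto)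
      have lr0: "0 \<le> lr" unfolding lr_def by (rule Liminf_bounded) (use q0 in auto)
      have LrL: "Lr \<le> ereal L" unfolding Lr_def by (rule Limsup_bounded) (use qL in auto)
      have c1: "Lr \<le> ll"
      proof (rule ccontr)
        assume "\<not> Lr \<le> ll"
        then have "ll < Lr" by simp
        then obtain p r where pr: "p \<in> \<rat>" "r \<in> \<rat>" "0 \<le> p" "p < r" "ll < ereal p" "ereal r < Lr"
          using ereal_rat_between ll0 by blast
        have "x \<in> Eset g p r"
          unfolding Eset_def
        proof (intro CollectI conjI allI impI)
          fix \<delta> :: real assume "\<delta> > 0"
          from H_left_lt[OF pr(5)[unfolded ll_def] this] obtain h where h: "0<h" "h<\<delta>" "q (-h) < p" by blast
          have "g x - g (x - h) < p * h" using h unfolding q_def by (simp add: field_simps)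
          then show "\<exists>h>0. h < \<delta> \<and> g x - g (x - h) < p * h" using h by blast
        next
          fix \<delta> :: real assume "\<delta> > 0"
          from H_right_gt[OF pr(6)[unfolded Lr_def] this] obtain h where h: "0<h" "h<\<delta>" "r < q h" by blast
          have "r * h < g (x + h) - g x" using h unfolding q_def by (simp add: field_simps)
          then show "\<exists>h>0. h < \<delta> \<and> r * h < g (x + h) - g x" using h by blast
        qed
        then have "x \<in> \<Union>F" using pr unfolding F_def Q_def by blast
        with nF show False by blast
      qed
      have c2: "Ll \<le> lr"
      proof (rule ccontr)
        assume "\<not> Ll \<le> lr"
        then have "lr < Ll" by simp
        then obtain p r where pr: "p \<in> \<rat>" "r \<in> \<rat>" "0 \<le> p" "p < r" "lr < ereal p" "ereal r < Ll"
          using ereal_rat_between lr0 by blast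
        have "-x \<in> Eset g' p r"
          unfolding Eset_def
        proof (intro CollectI conjI allI impI)
          fix \<delta> :: real assume "\<delta> > 0"
          from H_right_lt[OF pr(5)[unfolded lr_def] this] obtain h where h: "0<h" "h<\<delta>" "q h < p" by blast
          have "g' (-x) - g' (-x - h) < p * h" using h unfolding q_def g'_def by (simp add: field_simps)
          then show "\<exists>h>0. h < \<delta> \<and> g' (-x) - g' (-x - h) < p * h" using h by blast
        next
          fix \<delta> :: real assume "\<delta> > 0"
          from H_left_gt[OF pr(6)[unfolded Ll_def] this] obtain h where h: "0<h" "h<\<delta>" "r < q (-h)" by blast
          have "r * h < g' (-x + h) - g' (-x)" using h unfolding q_def g'_def by (simp add: field_simps)
          then show "\<exists>h>0. h < \<delta> \<and> r * h < g' (-x + h) - g' (-x)" using h by blast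
        qed
        then have "x \<in> uminus ` Eset g' p r" by (metis image_eqI minus_minus)
        then have "x \<in> \<Union>F" using pr unfolding F_def Q_def by blast
        with nF show False by blast
      qed
      have c3: "lr \<le> Lr" unfolding lr_def Lr_def by (rule Liminf_le_Limsup) simp
      have c4: "ll \<le> Ll" unfolding ll_def Ll_def by (rule Liminf_le_Limsup) simp
      have eqs: "lr = Lr" "Lr = ll" "ll = Ll" using c1 c2 c3 c4 by auto
      define c where "c = real_of_ereal Lr"
      have Lrc: "Lr = ereal c" unfolding c_def using lr0 LrL c3
        by (cases Lr) auto
      have "((\<lambda>h. ereal (q h)) \<longlongrightarrow> ereal c) (at_right 0)"
        by (rule Liminf_eq_Limsup) (use eqs Lrc in \<open>auto simp: lr_def Lr_def\<close>)
      then have tr: "(q \<longlongrightarrow> c) (at_right 0)" by (simp add: lim_ereal)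
      have "((\<lambda>h. ereal (q h)) \<longlongrightarrow> ereal c) (at_left 0)"
        by (rule Liminf_eq_Limsup) (use eqs Lrc in \<open>auto simp: ll_def Ll_def\<close>)
      then have tl: "(q \<longlongrightarrow> c) (at_left 0)" by (simp add: lim_ereal)
      have "(q \<longlongrightarrow> c) (at 0)" by (rule filterlim_split_at_real[OF tl tr])
      then have "(g has_real_derivative c) (at x)" unfolding DERIV_def q_def .
      with x show False by blast
    qed
  qed
  then show ?thesis using nF negligible_subset by blast
qed

lemma lip_deriv_ae:
  fixes f :: "real \<Rightarrow> real"
  assumes lip: "\<And>x y. \<bar>f x - f y\<bar> \<le> L * \<bar>x - y\<bar>" and L: "0 \<le> L"
  shows "negligible {x. \<not> f differentiable (at x)}"
proof -
  define g where "g = (\<lambda>x. f x + L * x)"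
  have mono: "g x \<le> g y" if "x \<le> y" for x y
    using lip[of y x] that unfolding g_def by (simp add: abs_le_iff algebra_simps)
  have lipg: "g y - g x \<le> (2*L) * (y - x)" if "x \<le> y" for x y
    using lip[of y x] that unfolding g_def by (simp add: abs_le_iff algebra_simps)
  have "{x. \<not> f differentiable (at x)} \<subseteq> {x. \<not> (\<exists>D. (g has_real_derivative D) (at x))}"
  proof (rule subsetI, rule CollectI, rule notI)
    fix x assume x: "x \<in> {x. \<not> f differentiable (at x)}" and "\<exists>D. (g has_real_derivative D) (at x)"
    then obtain D where D: "(g has_real_derivative D) (at x)" by blast
    have "((\<lambda>x. g x - L * x) has_real_derivative (D - L)) (at x)"
      using DERIV_diff[OF D DERIV_cmult_Id[of L]] by simp
    moreover have "(\<lambda>x. g x - L * x) = f" unfolding g_def by auto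
    ultimately have "(f has_real_derivative (D - L)) (at x)" by simp
    then have "f differentiable (at x)" using real_differentiable_def by blast
    with x show False by blast
  qed
  moreover have "negligible {x. \<not> (\<exists>D. (g has_real_derivative D) (at x))}"
    by (rule mono_lip_deriv_ae[OF mono lipg]) (use L in auto)
  ultimately show ?thesis using negligible_subset by blast
qed

lemma vec_lip_diff_ae:
  fixes q :: "real \<Rightarrow> 'a::euclidean_space"
  assumes lip: "\<And>x y. norm (q x - q y) \<le> L * \<bar>x - y\<bar>" and L: "0 \<le> L"
  shows "negligible {x. \<not> q differentiable (at x)}"
proof -
  have "{x. \<not> q differentiable (at x)} \<subseteq> (\<Union>b\<in>Basis. {x. \<not> (\<lambda>t. q t \<bullet> b) differentiable (at x)})"
    using differentiable_componentwise_within[of q _ UNIV] by blast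
  moreover have "negligible (\<Union>b\<in>Basis. {x. \<not> (\<lambda>t. q t \<bullet> b) differentiable (at x)})"
  proof (rule negligible_Union)
    show "finite ((\<lambda>b. {x. \<not> (\<lambda>t. q t \<bullet> b) differentiable (at x)}) ` Basis)" by simp
    fix S assume "S \<in> (\<lambda>b. {x. \<not> (\<lambda>t. q t \<bullet> b) differentiable (at x)}) ` Basis"
    then obtain b where b: "b \<in> Basis" "S = {x. \<not> (\<lambda>t. q t \<bullet> b) differentiable (at x)}" by blast
    have "\<bar>q x \<bullet> b - q y \<bullet> b\<bar> \<le> L * \<bar>x - y\<bar>" for x y
    proof -
      have "\<bar>q x \<bullet> b - q y \<bullet> b\<bar> = \<bar>(q x - q y) \<bullet> b\<bar>" by (simp add: inner_diff_left)
      also have "\<dots> \<le> norm (q x - q y)" using b(1) by (rule Basis_le_norm)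
      also have "\<dots> \<le> L * \<bar>x - y\<bar>" by (rule lip)
      finally show ?thesis .
    qed
    then show "negligible S" unfolding b(2) by (rule lip_deriv_ae[OF _ L])
  qed
  ultimately show ?thesis using negligible_subset by blast
qed

primrec eP :: "(real \<times> 'n \<Rightarrow> 'n) \<Rightarrow> real \<Rightarrow> 'n \<Rightarrow> real \<Rightarrow> nat \<Rightarrow> 'n::real_normed_vector" where
  "eP u t0 q0 h 0 = q0"
| "eP u t0 q0 h (Suc j) = eP u t0 q0 h j + h *\<^sub>R u (t0 + real j * h, eP u t0 q0 h j)"

definition eidx :: "real \<Rightarrow> real \<Rightarrow> real \<Rightarrow> nat" where
  "eidx t0 h s = nat \<lfloor>(s - t0) / h\<rfloor>"

definition eV :: "(real \<times> 'n \<Rightarrow> 'n) \<Rightarrow> real \<Rightarrow> 'n \<Rightarrow> real \<Rightarrow> real \<Rightarrow> 'n::real_normed_vector" where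
  "eV u t0 q0 h s = u (t0 + real (eidx t0 h s) * h, eP u t0 q0 h (eidx t0 h s))"

definition eY :: "(real \<times> 'n \<Rightarrow> 'n) \<Rightarrow> real \<Rightarrow> 'n \<Rightarrow> real \<Rightarrow> real \<Rightarrow> 'n::euclidean_space" where
  "eY u t0 q0 h s = q0 + integral {t0..s} (eV u t0 q0 h)"

lemma eidx_eq:
  assumes "h > 0" "t0 + real j * h \<le> s" "s < t0 + real (Suc j) * h"
  shows "eidx t0 h s = j"
proof -
  have "real j \<le> (s - t0) / h" "(s - t0) / h < real j + 1"
    using assms by (auto simp: field_simps)
  then have "\<lfloor>(s - t0) / h\<rfloor> = int j" by (intro floor_unique) auto
  then show ?thesis unfolding eidx_def by simp
qed

lemma eidx_bounds:
  assumes "h > 0" "t0 \<le> s"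
  shows "t0 + real (eidx t0 h s) * h \<le> s" "s < t0 + real (Suc (eidx t0 h s)) * h"
proof -
  have nn: "0 \<le> (s - t0) / h" using assms by simp
  then have e: "real (eidx t0 h s) = of_int \<lfloor>(s - t0) / h\<rfloor>" unfolding eidx_def by simp
  have "of_int \<lfloor>(s - t0) / h\<rfloor> \<le> (s - t0) / h" by (rule of_int_floor_le)
  then have "of_int \<lfloor>(s - t0) / h\<rfloor> * h \<le> s - t0" using assms(1) by (simp add: le_divide_eq)
  then show "t0 + real (eidx t0 h s) * h \<le> s" using e by simp
  have "(s - t0) / h < of_int \<lfloor>(s - t0) / h\<rfloor> + 1" by (rule real_of_int_floor_add_one_gt)
  then have "s - t0 < (of_int \<lfloor>(s - t0) / h\<rfloor> + 1) * h" by (simp only: pos_divide_less_eq[OF assms(1)])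
  then show "s < t0 + real (Suc (eidx t0 h s)) * h" using e by (simp add: algebra_simps)
qed

context
  fixes u :: "real \<times> 'n::euclidean_space \<Rightarrow> 'n" and t0 :: real and q0 :: 'n and M :: real
  assumes M: "0 < M" and ub: "\<And>t q. norm (u (t,q)) \<le> M * (1 + norm q)"
begin

lemma eP_bound:
  assumes "0 \<le> h"
  shows "1 + norm (eP u t0 q0 h j) \<le> exp (M * (real j * h)) * (1 + norm q0)"
proof (induction j)
  case 0 then show ?case by simp
next
  case (Suc j)
  let ?P = "eP u t0 q0 h j"
  have "1 + norm (eP u t0 q0 h (Suc j)) \<le> 1 + norm ?P + h * norm (u (t0 + real j * h, ?P))"
    using assms by (simp add: norm_triangle_le)
  also have "\<dots> \<le> 1 + norm ?P + h * (M * (1 + norm ?P))"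
    using assms ub by (simp add: mult_left_mono)
  also have "\<dots> = (1 + norm ?P) * (1 + h * M)" by (simp add: algebra_simps)
  also have "\<dots> \<le> (1 + norm ?P) * exp (h * M)"
    using exp_ge_add_one_self[of "h*M"] by (intro mult_left_mono) (auto simp: add.commute)
  also have "\<dots> \<le> exp (M * (real j * h)) * (1 + norm q0) * exp (h * M)"
    by (intro mult_right_mono Suc.IH) auto
  also have "\<dots> = exp (M * (real (Suc j) * h)) * (1 + norm q0)"
    by (simp add: algebra_simps exp_add[symmetric])
  finally show ?case .
qed

definition "Lam T = M * (exp (M * (T - t0)) * (1 + norm q0))"

lemma Lam_nonneg: "0 \<le> Lam T"
  unfolding Lam_def using M by simp

lemma eV_bound:
  assumes "h > 0" "t0 \<le> s" "s \<le> T"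
  shows "norm (eV u t0 q0 h s) \<le> Lam T"
proof -
  let ?j = "eidx t0 h s"
  have jh: "real ?j * h \<le> T - t0" using eidx_bounds[OF assms(1,2)] assms by simp
  have "norm (eV u t0 q0 h s) \<le> M * (1 + norm (eP u t0 q0 h ?j))" unfolding eV_def by (rule ub)
  also have "\<dots> \<le> M * (exp (M * (real ?j * h)) * (1 + norm q0))"
    using eP_bound[of h ?j] assms M by (intro mult_left_mono) auto
  also have "\<dots> \<le> Lam T" unfolding Lam_def using M jh
    by (intro mult_left_mono mult_right_mono) auto
  finally show ?thesis .
qed

lemma eV_int_step:
  assumes "h > 0"
  shows "(eV u t0 q0 h has_integral (h *\<^sub>R u (t0 + real j * h, eP u t0 q0 h j))) {t0 + real j * h .. t0 + real (Suc j) * h}"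
proof -
  let ?c = "u (t0 + real j * h, eP u t0 q0 h j)"
  have "((\<lambda>x. ?c) has_integral (Henstock_Kurzweil_Integration.content {t0 + real j * h .. t0 + real (Suc j) * h}) *\<^sub>R ?c) {t0 + real j * h .. t0 + real (Suc j) * h}"
    by (rule has_integral_const_real)
  moreover have "Henstock_Kurzweil_Integration.content {t0 + real j * h .. t0 + real (Suc j) * h} = h" using assms by (simp add: algebra_simps)
  ultimately have c: "((\<lambda>x. ?c) has_integral h *\<^sub>R ?c) {t0 + real j * h .. t0 + real (Suc j) * h}" by simp
  show ?thesis
  proof (rule has_integral_spike_finite[OF _ _ c])
    show "finite {t0 + real (Suc j) * h}" by simp
    fix x assume "x \<in> {t0 + real j * h .. t0 + real (Suc j) * h} - {t0 + real (Suc j) * h}"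
    then have "t0 + real j * h \<le> x" "x < t0 + real (Suc j) * h" by auto
    then have "eidx t0 h x = j" by (rule eidx_eq[OF assms])
    then show "eV u t0 q0 h x = ?c" unfolding eV_def by simp
  qed
qed

lemma eV_int_nodes:
  assumes "h > 0"
  shows "(eV u t0 q0 h has_integral (eP u t0 q0 h j - q0)) {t0 .. t0 + real j * h}"
proof (induction j)
  case 0
  show ?case using has_integral_refl(2)[of "eV u t0 q0 h" t0] by simp
next
  case (Suc j)
  have "(eV u t0 q0 h has_integral (eP u t0 q0 h j - q0) + h *\<^sub>R u (t0 + real j * h, eP u t0 q0 h j)) {t0 .. t0 + real (Suc j) * h}"
    by (rule has_integral_combine[OF _ _ Suc.IH eV_int_step[OF assms]]) (use assms in \<open>auto simp: algebra_simps\<close>)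
  then show ?case by (simp add: algebra_simps)
qed

lemma eV_integrable:
  assumes "h > 0" "t0 \<le> a" "a \<le> b"
  shows "eV u t0 q0 h integrable_on {a..b}"
proof -
  let ?j = "Suc (eidx t0 h b)"
  have tb: "t0 \<le> b" using assms by simp
  have "b < t0 + real ?j * h" using eidx_bounds(2)[OF assms(1) tb] .
  then have "{a..b} \<subseteq> {t0 .. t0 + real ?j * h}" using assms by auto
  then show ?thesis using integrable_subinterval_real eV_int_nodes[OF assms(1)] by blast
qed

lemma eY_node:
  assumes "h > 0"
  shows "eY u t0 q0 h (t0 + real j * h) = eP u t0 q0 h j"
  unfolding eY_def using integral_unique[OF eV_int_nodes[OF assms, of j]] by simp

lemma eY_t0: "eY u t0 q0 h t0 = q0"
  unfolding eY_def by simp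

lemma eY_diff:
  assumes "h > 0" "t0 \<le> s" "s \<le> s'"
  shows "eY u t0 q0 h s' - eY u t0 q0 h s = integral {s..s'} (eV u t0 q0 h)"
proof -
  have "integral {t0..s} (eV u t0 q0 h) + integral {s..s'} (eV u t0 q0 h) = integral {t0..s'} (eV u t0 q0 h)"
    by (rule Henstock_Kurzweil_Integration.integral_combine) (use assms eV_integrable[OF assms(1), of t0 s'] in auto)
  then show ?thesis unfolding eY_def by (simp add: algebra_simps)
qed

lemma eY_lip:
  assumes "h > 0" "t0 \<le> s" "s \<le> T" "t0 \<le> s'" "s' \<le> T"
  shows "norm (eY u t0 q0 h s - eY u t0 q0 h s') \<le> Lam T * \<bar>s - s'\<bar>"
proof -
  have *: "norm (eY u t0 q0 h b - eY u t0 q0 h a) \<le> Lam T * (b - a)"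
    if "t0 \<le> a" "a \<le> b" "b \<le> T" for a b
  proof -
    have i: "(eV u t0 q0 h has_integral integral {a..b} (eV u t0 q0 h)) {a..b}"
      using eV_integrable[OF assms(1) that(1,2)] by (rule integrable_integral)
    have "norm (integral {a..b} (eV u t0 q0 h)) \<le> Lam T * Henstock_Kurzweil_Integration.content {a..b}"
      by (rule has_integral_bound_real[OF Lam_nonneg _ i, of "{}"])
         (use eV_bound[OF assms(1)] that in auto)
    then show ?thesis using eY_diff[OF assms(1) that(1,2)] that by simp
  qed
  show ?thesis
  proof (cases "s \<le> s'")
    case True then show ?thesis using *[of s s'] assms by (simp add: norm_minus_commute)
  next
    case False then show ?thesis using *[of s' s] assms by simp
  qed
qed

lemma eY_funct:
  assumes "h > 0" "t0 \<le> s" "s \<le> s'" "\<And>x. x \<in> {s..s'} \<Longrightarrow> a \<bullet> eV u t0 q0 h x \<le> \<beta>"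
  shows "a \<bullet> (eY u t0 q0 h s' - eY u t0 q0 h s) \<le> \<beta> * (s' - s)"
proof -
  have i: "(eV u t0 q0 h has_integral integral {s..s'} (eV u t0 q0 h)) {s..s'}"
    using eV_integrable[OF assms(1-3)] by (rule integrable_integral)
  have l: "((\<lambda>v. a \<bullet> v) \<circ> eV u t0 q0 h has_integral a \<bullet> integral {s..s'} (eV u t0 q0 h)) {s..s'}"
    by (rule has_integral_linear[OF i]) (rule bounded_linear_inner_right)
  have c: "((\<lambda>x. \<beta>) has_integral Henstock_Kurzweil_Integration.content {s..s'} *\<^sub>R \<beta>) {s..s'}" by (rule has_integral_const_real)
  have "a \<bullet> integral {s..s'} (eV u t0 q0 h) \<le> Henstock_Kurzweil_Integration.content {s..s'} *\<^sub>R \<beta>"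
    by (rule has_integral_le[OF l c]) (use assms(4) in auto)
  then show ?thesis using eY_diff[OF assms(1-3)] assms(3) by (simp add: mult.commute)
qed

lemma eV_node:
  assumes "h > 0" "t0 \<le> s"
  shows "\<exists>t'. t0 \<le> t' \<and> s - h \<le> t' \<and> t' \<le> s \<and> eV u t0 q0 h s = u (t', eY u t0 q0 h t')"
proof (intro exI conjI)
  let ?t = "t0 + real (eidx t0 h s) * h"
  show "t0 \<le> ?t" using assms by simp
  show "s - h \<le> ?t" "?t \<le> s" using eidx_bounds[OF assms] by (auto simp: algebra_simps)
  show "eV u t0 q0 h s = u (?t, eY u t0 q0 h ?t)" unfolding eV_def eY_node[OF assms(1)] ..
qed

end

lemma tri3: "norm (a - d) \<le> norm (a - b) + norm (b - c) + norm (c - (d::'a::real_normed_vector))"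
  using norm_diff_triangle_le by blast

lemma rat_enum_dense:
  fixes t0 s \<eta> :: real
  assumes "t0 \<le> s" "0 < \<eta>"
  shows "\<exists>n. \<bar>(t0 + \<bar>real_of_rat (from_nat n)\<bar>) - s\<bar> < \<eta>"
proof -
  have "s - t0 < s - t0 + \<eta>" using assms by simp
  from Rats_dense_in_real[OF this] obtain \<rho> where \<rho>: "\<rho> \<in> \<rat>" "s - t0 < \<rho>" "\<rho> < s - t0 + \<eta>" by blast
  from \<rho>(1) obtain r where r: "\<rho> = real_of_rat r" by (rule Rats_cases)
  have "\<bar>\<rho>\<bar> = \<rho>" using \<rho>(2) assms by simp
  then have "\<bar>(t0 + \<bar>real_of_rat (from_nat (to_nat r))\<bar>) - s\<bar> < \<eta>"
    using \<rho> r by simp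
  then show ?thesis by blast
qed

lemma equi_lip_subseq:
  fixes F :: "nat \<Rightarrow> real \<Rightarrow> 'n::euclidean_space" and \<Lambda> :: "real \<Rightarrow> real"
  assumes F0: "\<And>k. F k t0 = q0"
    and lip: "\<And>k T s s'. t0 \<le> s \<Longrightarrow> s \<le> T \<Longrightarrow> t0 \<le> s' \<Longrightarrow> s' \<le> T \<Longrightarrow> norm (F k s - F k s') \<le> \<Lambda> T * \<bar>s - s'\<bar>"
    and \<Lambda>0: "\<And>T. 0 \<le> \<Lambda> T"
  shows "\<exists>\<sigma> f. strict_mono \<sigma> \<and> (\<forall>s. t0 \<le> s \<longrightarrow> (\<lambda>k. F (\<sigma> k) s) \<longlonglongrightarrow> f s)"
proof -
  define e where "e = (\<lambda>n. t0 + \<bar>real_of_rat (from_nat n)\<bar>)"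
  have e0: "t0 \<le> e n" for n unfolding e_def by simp
  have bnd: "bounded (range (\<lambda>k. F (s k) (e n)))" for s n
  proof -
    have "norm (F (s k) (e n)) \<le> norm q0 + \<Lambda> (e n) * \<bar>e n - t0\<bar>" for k
    proof -
      have "norm (F (s k) (e n) - F (s k) t0) \<le> \<Lambda> (e n) * \<bar>e n - t0\<bar>"
        by (rule lip) (use e0 in auto)
      then show ?thesis using F0[of "s k"] norm_triangle_sub[of "F (s k) (e n)" q0] by simp
    qed
    then show ?thesis unfolding bounded_iff by blast
  qed
  interpret subseqs "\<lambda>n s. convergent (\<lambda>k. F (s k) (e n))"
  proof
    fix n and s :: "nat \<Rightarrow> nat" assume "strict_mono s"
    obtain l r where "strict_mono r" "((\<lambda>k. F (s k) (e n)) \<circ> r) \<longlonglongrightarrow> l"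
      using bounded_imp_convergent_subsequence[OF bnd[of s n]] by blast
    then show "\<exists>r'. strict_mono r' \<and> convergent (\<lambda>k. F ((s \<circ> r') k) (e n))"
      by (auto simp: convergent_def o_def)
  qed
  have conv_e: "convergent (\<lambda>k. F (diagseq k) (e n))" for n
  proof -
    have "convergent (\<lambda>k. F ((diagseq \<circ> (+) (Suc n)) k) (e n))"
    proof (rule diagseq_holds)
      fix r s n assume "strict_mono (r::nat\<Rightarrow>nat)" "convergent (\<lambda>k. F (s k) (e n))"
      then show "convergent (\<lambda>k. F ((s \<circ> r) k) (e n))"
        using LIMSEQ_subseq_LIMSEQ by (auto simp: convergent_def o_def)
    qed
    then obtain L where "(\<lambda>k. F (diagseq (Suc n + k)) (e n)) \<longlonglongrightarrow> L" by (auto simp: convergent_def o_def)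
    then have "(\<lambda>k. F (diagseq (k + Suc n)) (e n)) \<longlonglongrightarrow> L" by (simp add: add.commute)
    then have "(\<lambda>k. F (diagseq k) (e n)) \<longlonglongrightarrow> L" by (rule LIMSEQ_offset)
    then show ?thesis by (auto simp: convergent_def)
  qed
  have conv: "convergent (\<lambda>k. F (diagseq k) s)" if s: "t0 \<le> s" for s
  proof -
    define T where "T = s + 1"
    have "Cauchy (\<lambda>k. F (diagseq k) s)"
    proof (rule CauchyI)
      fix \<epsilon> :: real assume \<epsilon>: "0 < \<epsilon>"
      define \<eta> where "\<eta> = min 1 (\<epsilon> / (3 * (\<Lambda> T + 1)))"
      have \<eta>: "0 < \<eta>" using \<epsilon> \<Lambda>0[of T] unfolding \<eta>_def by simp
      obtain n where n: "\<bar>e n - s\<bar> < \<eta>" using rat_enum_dense[OF s \<eta>] unfolding e_def by blast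
      have enT: "e n \<le> T" using n unfolding T_def \<eta>_def by linarith
      have "\<Lambda> T * \<bar>e n - s\<bar> \<le> \<Lambda> T * (\<epsilon> / (3 * (\<Lambda> T + 1)))"
        using n \<Lambda>0[of T] unfolding \<eta>_def by (intro mult_left_mono) auto
      also have "\<dots> < \<epsilon> / 3"
        using \<epsilon> \<Lambda>0[of T] by (simp add: field_simps)
      finally have small: "\<Lambda> T * \<bar>e n - s\<bar> < \<epsilon> / 3" .
      have "Cauchy (\<lambda>k. F (diagseq k) (e n))" using conv_e[of n] by (simp add: convergent_Cauchy)
      then obtain N where N: "\<And>k l. k \<ge> N \<Longrightarrow> l \<ge> N \<Longrightarrow> norm (F (diagseq k) (e n) - F (diagseq l) (e n)) < \<epsilon> / 3"
        using \<epsilon> unfolding Cauchy_iff by (metis divide_pos_pos zero_less_numeral)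
      show "\<exists>N. \<forall>k\<ge>N. \<forall>l\<ge>N. norm (F (diagseq k) s - F (diagseq l) s) < \<epsilon>"
      proof (intro exI allI impI)
        fix k l assume kl: "N \<le> k" "N \<le> l"
        have a: "norm (F (diagseq k) s - F (diagseq k) (e n)) \<le> \<Lambda> T * \<bar>e n - s\<bar>"
          using lip[of s T "e n" "diagseq k"] s enT e0[of n] by (simp add: T_def abs_minus_commute)
        have b: "norm (F (diagseq l) (e n) - F (diagseq l) s) \<le> \<Lambda> T * \<bar>e n - s\<bar>"
          using lip[of "e n" T s "diagseq l"] s enT e0[of n] by (simp add: T_def)
        have "norm (F (diagseq k) s - F (diagseq l) s) \<le> norm (F (diagseq k) s - F (diagseq k) (e n))
            + norm (F (diagseq k) (e n) - F (diagseq l) (e n)) + norm (F (diagseq l) (e n) - F (diagseq l) s)"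
          by (rule tri3)
        then show "norm (F (diagseq k) s - F (diagseq l) s) < \<epsilon>"
          using a b N[OF kl] small by linarith
      qed
    qed
    then show ?thesis by (simp add: Cauchy_convergent_iff)
  qed
  show ?thesis
  proof (intro exI conjI allI impI)
    show "strict_mono diagseq" by (rule subseq_diagseq)
    fix s assume "t0 \<le> s"
    then show "(\<lambda>k. F (diagseq k) s) \<longlonglongrightarrow> lim (\<lambda>k. F (diagseq k) s)"
      using conv convergent_LIMSEQ_iff by blast
  qed
qed

lemma lip_abs_cont:
  fixes f :: "real \<Rightarrow> 'a::real_normed_vector"
  assumes lip: "\<And>s s'. s \<in> {a..b} \<Longrightarrow> s' \<in> {a..b} \<Longrightarrow> norm (f s - f s') \<le> K * \<bar>s - s'\<bar>" and K: "0 \<le> K"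
  shows "abs_cont_on a b f"
  unfolding abs_cont_on_def
proof (intro allI impI)
  fix \<epsilon> :: real assume \<epsilon>: "0 < \<epsilon>"
  show "\<exists>\<delta>>0. \<forall>N s e. (\<forall>k<N. s k \<le> e k \<and> {s k..e k} \<subseteq> {a..b}) \<and>
          (\<forall>k<N. \<forall>k'<N. k \<noteq> k' \<longrightarrow> {s k<..<e k} \<inter> {s k'<..<e k'} = {}) \<and>
          (\<Sum>k<N. e k - s k) < \<delta> \<longrightarrow> (\<Sum>k<N. norm (f (e k) - f (s k))) < \<epsilon>"
  proof (intro exI[of _ "\<epsilon> / (K + 1)"] conjI allI impI)
    show "0 < \<epsilon> / (K + 1)" using \<epsilon> K by simp
    fix N s e assume H: "(\<forall>k<N. s k \<le> e k \<and> {s k..e k} \<subseteq> {a..b}) \<and>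
          (\<forall>k<N. \<forall>k'<N. k \<noteq> k' \<longrightarrow> {s k<..<e k} \<inter> {s k'<..<e k'} = {}) \<and>
          (\<Sum>k<N. e k - s k) < \<epsilon> / (K + 1)"
    have "(\<Sum>k<N. norm (f (e k) - f (s k))) \<le> (\<Sum>k<N. K * (e k - s k))"
    proof (rule sum_mono)
      fix k assume "k \<in> {..<N}"
      then have k: "s k \<le> e k" "{s k..e k} \<subseteq> {a..b}" using H by auto
      then have "s k \<in> {a..b}" "e k \<in> {a..b}" by auto
      then have "norm (f (e k) - f (s k)) \<le> K * \<bar>e k - s k\<bar>" using lip[of "e k" "s k"] by blast
      then show "norm (f (e k) - f (s k)) \<le> K * (e k - s k)" using k by simp
    qed
    also have "\<dots> = K * (\<Sum>k<N. e k - s k)" by (simp add: sum_distrib_left)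
    also have "\<dots> \<le> K * (\<epsilon> / (K + 1))" using H K by (intro mult_left_mono) auto
    also have "\<dots> < \<epsilon>" using \<epsilon> K by (simp add: field_simps)
    finally show "(\<Sum>k<N. norm (f (e k) - f (s k))) < \<epsilon>" .
  qed
qed

lemma inner_deriv:
  fixes f :: "real \<Rightarrow> 'n::euclidean_space"
  assumes "(f has_vector_derivative d) (at t)"
  shows "((\<lambda>s. a \<bullet> f s) has_real_derivative (a \<bullet> d)) (at t)"
proof -
  have "((\<lambda>s. a \<bullet> f s) has_derivative (\<lambda>x. a \<bullet> (x *\<^sub>R d))) (at t)"
    using bounded_linear.has_derivative[OF bounded_linear_inner_right assms[unfolded has_vector_derivative_def]] .
  then show ?thesis unfolding has_field_derivative_def by (simp add: mult.commute[of _ "a \<bullet> d"])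
qed

lemma kras_exists:
  fixes u :: "real \<times> 'n::euclidean_space \<Rightarrow> 'n"
  assumes M: "0 < M" and ub: "\<And>t q. norm (u (t,q)) \<le> M * (1 + norm q)"
  shows "\<exists>q. krasovskii_solution u t0 q0 q"
proof -
  define hk where "hk = (\<lambda>k::nat. 1 / (real k + 1))"
  have hk0: "0 < hk k" for k unfolding hk_def by simp
  define F where "F = (\<lambda>k. eY u t0 q0 (hk k))"
  define \<Lambda> where "\<Lambda> = Lam t0 q0 M"
  have \<Lambda>0: "0 \<le> \<Lambda> T" for T unfolding \<Lambda>_def by (rule Lam_nonneg[OF M ub])
  have Flip: "norm (F k s - F k s') \<le> \<Lambda> T * \<bar>s - s'\<bar>"
    if "t0 \<le> s" "s \<le> T" "t0 \<le> s'" "s' \<le> T" for k T s s'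
    unfolding F_def \<Lambda>_def by (rule eY_lip[OF M ub hk0 that])
  have F0: "F k t0 = q0" for k unfolding F_def by (rule eY_t0[OF M ub])
  obtain \<sigma> f where \<sigma>: "strict_mono \<sigma>" and conv: "\<And>s. t0 \<le> s \<Longrightarrow> (\<lambda>k. F (\<sigma> k) s) \<longlonglongrightarrow> f s"
    using equi_lip_subseq[of F t0 q0 \<Lambda>, OF F0 Flip \<Lambda>0] by blast
  have flip: "norm (f s - f s') \<le> \<Lambda> T * \<bar>s - s'\<bar>"
    if "t0 \<le> s" "s \<le> T" "t0 \<le> s'" "s' \<le> T" for T s s'
  proof -
    have "(\<lambda>k. norm (F (\<sigma> k) s - F (\<sigma> k) s')) \<longlonglongrightarrow> norm (f s - f s')"
      using that by (intro tendsto_intros conv) auto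
    then show ?thesis by (rule LIMSEQ_le_const2) (use Flip[OF that] in auto)
  qed
  have f0: "f t0 = q0"
  proof -
    have "(\<lambda>k. F (\<sigma> k) t0) \<longlonglongrightarrow> f t0" using conv by simp
    then have "(\<lambda>k. q0) \<longlonglongrightarrow> f t0" by (simp add: F0)
    then show ?thesis using LIMSEQ_unique tendsto_const by blast
  qed
  define \<phi> where "\<phi> = (\<lambda>k::nat. \<lambda>s. f (min (t0 + real k) (max t0 s)))"
  define N where "N = (\<Union>k. {x. \<not> \<phi> k differentiable (at x)})"
  have nk: "negligible {x. \<not> \<phi> k differentiable (at x)}" for k
  proof (rule vec_lip_diff_ae[OF _ \<Lambda>0[of "t0 + real k"]])
    fix x y
    have "norm (\<phi> k x - \<phi> k y) \<le> \<Lambda> (t0 + real k) * \<bar>min (t0 + real k) (max t0 x) - min (t0 + real k) (max t0 y)\<bar>"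
      unfolding \<phi>_def by (rule flip) auto
    also have "\<dots> \<le> \<Lambda> (t0 + real k) * \<bar>x - y\<bar>"
      by (intro mult_left_mono \<Lambda>0) linarith
    finally show "norm (\<phi> k x - \<phi> k y) \<le> \<Lambda> (t0 + real k) * \<bar>x - y\<bar>" .
  qed
  have nN: "negligible N"
    unfolding N_def by (rule negligible_countable_Union) (use nk in auto)
  have deriv: "\<exists>d. (f has_vector_derivative d) (at t)" if t: "t > t0" "t \<notin> N" for t
  proof -
    obtain k :: nat where k: "t - t0 < real k" using reals_Archimedean2 by blast
    have "\<phi> k differentiable (at t)" using t unfolding N_def by blast
    then have d: "(\<phi> k has_vector_derivative vector_derivative (\<phi> k) (at t)) (at t)"
      by (simp add: vector_derivative_works)
    have "(f has_vector_derivative vector_derivative (\<phi> k) (at t)) (at t)"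
    proof (rule has_vector_derivative_transform_within_open[OF d, of "{t0<..<t0 + real k}"])
      show "open {t0<..<t0 + real k}" by simp
      show "t \<in> {t0<..<t0 + real k}" using t k by simp
      fix y assume "y \<in> {t0<..<t0 + real k}"
      then show "\<phi> k y = f y" unfolding \<phi>_def by simp
    qed
    then show ?thesis by blast
  qed
  have incl: "d \<in> krasovskii_set u (t, f t)" if t: "t > t0" and d: "(f has_vector_derivative d) (at t)" for t d
    unfolding krasovskii_set_def
  proof (intro INT_I)
    fix \<delta> :: real assume "\<delta> \<in> {0<..}"
    then have \<delta>: "0 < \<delta>" by simp
    define K where "K = closure (convex hull (u ` cball (t, f t) \<delta>))"
    show "d \<in> closure (convex hull (u ` cball (t, f t) \<delta>))"
    proof (rule ccontr)
      assume "d \<notin> closure (convex hull (u ` cball (t, f t) \<delta>))"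
      then have dK: "d \<notin> K" unfolding K_def .
      have cK: "convex K" "closed K" unfolding K_def
        by (intro convex_closure convex_convex_hull) (rule closed_closure)
      obtain a b where ab: "a \<bullet> d < b" "\<forall>x\<in>K. b < a \<bullet> x"
        using separating_hyperplane_closed_point[OF cK dK] by blast
      have uK: "b < a \<bullet> u y" if "y \<in> cball (t, f t) \<delta>" for y
      proof -
        have "u y \<in> u ` cball (t, f t) \<delta>" using that by blast
        then have "u y \<in> convex hull (u ` cball (t, f t) \<delta>)" by (rule hull_inc)
        then have "u y \<in> K" unfolding K_def using closure_subset by blast
        then show ?thesis using ab(2) by blast
      qed
      define T where "T = t + 1"
      define L where "L = \<Lambda> T"
      have L0: "0 \<le> L" unfolding L_def by (rule \<Lambda>0)
      define \<tau>0 where "\<tau>0 = min (1/2) (\<delta> / (8 * (L + 1)))"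
      have \<tau>0: "0 < \<tau>0" unfolding \<tau>0_def using \<delta> L0 by simp
      have key: "b * \<tau> \<le> a \<bullet> (f (t + \<tau>) - f t)" if \<tau>: "0 < \<tau>" "\<tau> \<le> \<tau>0" for \<tau>
      proof -
        have \<tau>h: "\<tau> \<le> 1/2" "2 * \<tau> * (L + 1) \<le> \<delta> / 4"
        proof -
          show "\<tau> \<le> 1/2" using \<tau> unfolding \<tau>0_def by simp
          have "\<tau> \<le> \<delta> / (8 * (L + 1))" using \<tau> unfolding \<tau>0_def by simp
          then show "2 * \<tau> * (L + 1) \<le> \<delta> / 4" using L0 by (simp add: field_simps)
        qed
        have conv_t: "(\<lambda>k. F (\<sigma> k) t) \<longlonglongrightarrow> f t" by (rule conv) (use t in simp)
        have conv_tt: "(\<lambda>k. F (\<sigma> k) (t + \<tau>)) \<longlonglongrightarrow> f (t + \<tau>)" by (rule conv) (use t \<tau> in simp)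
        obtain N1 where N1: "\<And>k. k \<ge> N1 \<Longrightarrow> norm (F (\<sigma> k) t - f t) < \<delta>/4"
          using LIMSEQ_D[OF conv_t, of "\<delta>/4"] \<delta> by auto
        obtain N2 :: nat where N2: "1/\<tau> < real N2" using reals_Archimedean2 by blast
        have ev: "b * \<tau> \<le> a \<bullet> (F (\<sigma> k) (t + \<tau>) - F (\<sigma> k) t)" if k: "k \<ge> max N1 N2" for k
        proof -
          let ?h = "hk (\<sigma> k)"
          have "k \<le> \<sigma> k" using seq_suble[OF \<sigma>] by simp
          then have N2k: "real N2 \<le> real (\<sigma> k) + 1" using k by simp
          have N2p: "0 < real N2" using N2 \<tau> by (smt (verit) divide_pos_pos)
          have hle: "?h \<le> \<tau>"
          proof -
            have "?h \<le> 1 / real N2" unfolding hk_def using N2k N2p by (simp add: frac_le)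
            also have "\<dots> < \<tau>" using N2 \<tau> N2p by (simp add: field_simps)
            finally show ?thesis by simp
          qed
          have mem: "(-a) \<bullet> eV u t0 q0 ?h x \<le> -b" if x: "x \<in> {t..t+\<tau>}" for x
          proof -
            have tx: "t0 \<le> x" using x t by simp
            obtain t' where t': "t0 \<le> t'" "x - ?h \<le> t'" "t' \<le> x" "eV u t0 q0 ?h x = u (t', eY u t0 q0 ?h t')"
              using eV_node[OF M ub hk0 tx] by blast
            have d1: "\<bar>t' - t\<bar> \<le> 2 * \<tau>" using t' x hle by auto
            have "norm (F (\<sigma> k) t' - F (\<sigma> k) t) \<le> L * \<bar>t' - t\<bar>"
              unfolding L_def by (rule Flip) (use t' x \<tau>h t in \<open>auto simp: T_def\<close>)
            also have "\<dots> \<le> L * (2 * \<tau>)" using d1 L0 by (intro mult_left_mono) auto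
            finally have d2a: "norm (F (\<sigma> k) t' - F (\<sigma> k) t) \<le> L * (2 * \<tau>)" .
            have d2: "norm (eY u t0 q0 ?h t' - f t) \<le> L * (2 * \<tau>) + \<delta>/4"
              using norm_triangle_le[OF add_mono[OF d2a less_imp_le[OF N1[of k]]]] k
              unfolding F_def by (simp add: algebra_simps)
            have "dist (t', eY u t0 q0 ?h t') (t, f t) \<le> \<bar>t' - t\<bar> + norm (eY u t0 q0 ?h t' - f t)"
              unfolding dist_Pair_Pair using sqrt_sum_squares_le_sum_abs[of "dist t' t" "dist (eY u t0 q0 ?h t') (f t)"]
              by (simp add: dist_real_def dist_norm)
            also have "\<dots> \<le> 2 * \<tau> + (L * (2 * \<tau>) + \<delta>/4)" using d1 d2 by simp
            also have "\<dots> \<le> \<delta>"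
            proof -
              have "2 * \<tau> + L * (2 * \<tau>) = 2 * \<tau> * (L + 1)" by (simp add: algebra_simps)
              then show ?thesis using \<tau>h(2) \<delta> by linarith
            qed
            finally have "(t', eY u t0 q0 ?h t') \<in> cball (t, f t) \<delta>" by (simp add: dist_commute)
            then have "b < a \<bullet> u (t', eY u t0 q0 ?h t')" by (rule uK)
            then show ?thesis using t'(4) by simp
          qed
          have "(-a) \<bullet> (eY u t0 q0 ?h (t + \<tau>) - eY u t0 q0 ?h t) \<le> (-b) * ((t + \<tau>) - t)"
            by (rule eY_funct[OF M ub hk0]) (use t \<tau> mem in auto)
          then show ?thesis unfolding F_def by simp
        qed
        have lim: "(\<lambda>k. a \<bullet> (F (\<sigma> k) (t + \<tau>) - F (\<sigma> k) t)) \<longlonglongrightarrow> a \<bullet> (f (t + \<tau>) - f t)"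
          by (intro tendsto_intros conv_t conv_tt)
        show ?thesis by (rule LIMSEQ_le_const[OF lim]) (use ev in blast)
      qed
      have "((\<lambda>s. a \<bullet> f s) has_real_derivative (a \<bullet> d)) (at t)" by (rule inner_deriv[OF d])
      then have "((\<lambda>\<tau>. (a \<bullet> f (t + \<tau>) - a \<bullet> f t) / \<tau>) \<longlongrightarrow> a \<bullet> d) (at 0)" unfolding DERIV_def .
      then have lr: "((\<lambda>\<tau>. (a \<bullet> f (t + \<tau>) - a \<bullet> f t) / \<tau>) \<longlongrightarrow> a \<bullet> d) (at_right 0)"
        by (rule filterlim_mono) (auto simp: at_le)
      have "eventually (\<lambda>\<tau>. b \<le> (a \<bullet> f (t + \<tau>) - a \<bullet> f t) / \<tau>) (at_right 0)"
        unfolding eventually_at_right_field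
      proof (intro exI[of _ \<tau>0] conjI allI impI)
        show "0 < \<tau>0" by (rule \<tau>0)
        fix \<tau> :: real assume "0 < \<tau>" "\<tau> < \<tau>0"
        then have "b * \<tau> \<le> a \<bullet> (f (t + \<tau>) - f t)" using key by simp
        then show "b \<le> (a \<bullet> f (t + \<tau>) - a \<bullet> f t) / \<tau>"
          using \<open>0 < \<tau>\<close> by (simp add: pos_le_divide_eq inner_diff_right)
      qed
      then have "b \<le> a \<bullet> d" by (rule tendsto_lowerbound[OF lr]) simp
      with ab(1) show False by simp
    qed
  qed
  show ?thesis
  proof (intro exI)
    show "krasovskii_solution u t0 q0 f"
      unfolding krasovskii_solution_def
    proof (intro conjI allI impI)
      fix a b assume ab: "t0 \<le> a \<and> a \<le> b"
      show "abs_cont_on a b f"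
        by (rule lip_abs_cont[OF _ \<Lambda>0[of b]]) (use ab in \<open>auto intro!: flip\<close>)
    next
      show "f t0 = q0" by (rule f0)
    next
      show "\<exists>N. N \<in> null_sets lebesgue \<and> (\<forall>t. t0 < t \<and> t \<notin> N \<longrightarrow>
              (\<exists>d. (f has_vector_derivative d) (at t) \<and> d \<in> krasovskii_set u (t, f t)))"
      proof (rule exI[of _ N], intro conjI allI impI)
        show "N \<in> null_sets lebesgue" using nN by (simp add: negligible_iff_null_sets)
        fix t assume "t0 < t \<and> t \<notin> N"
        then obtain d where "(f has_vector_derivative d) (at t)" using deriv by blast
        then show "\<exists>d. (f has_vector_derivative d) (at t) \<and> d \<in> krasovskii_set u (t, f t)"
          using incl \<open>t0 < t \<and> t \<notin> N\<close> by blast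
      qed
    qed
  qed
qed

lemma comp2: "\<bar>A $ i $ j\<bar> \<le> norm (A::real^'n^'m)"
  using component_le_norm_cart[of "A$i" j] Finite_Cartesian_Product.norm_nth_le[of A i] by linarith

lemma mv_bound:
  fixes A :: "real^'n^'m"
  shows "norm (A *v x) \<le> real CARD('m) * real CARD('n) * norm A * norm x"
proof -
  have "onorm ((*v) A) \<le> real CARD('m) * real CARD('n) * norm A"
    by (rule onorm_le_matrix_component) (rule comp2)
  moreover have "norm (A *v x) \<le> onorm ((*v) A) * norm x"
    by (rule onorm[OF matrix_vector_mul_bounded_linear])
  ultimately show ?thesis by (meson mult_right_mono norm_ge_zero order_trans)
qed

lemma vm_bound:
  fixes A :: "real^'n^'m"
  shows "norm (x v* A) \<le> real CARD('n) * real CARD('m) * norm A * norm x"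
proof -
  have "onorm ((*v) (transpose A)) \<le> real CARD('n) * real CARD('m) * norm A"
  proof (rule onorm_le_matrix_component)
    fix i j
    have "\<bar>transpose A $ i $ j\<bar> = \<bar>A $ j $ i\<bar>" by (simp add: transpose_def)
    also have "\<dots> \<le> norm A" by (rule comp2)
    finally show "\<bar>transpose A $ i $ j\<bar> \<le> norm A" .
  qed
  moreover have "norm (transpose A *v x) \<le> onorm ((*v) (transpose A)) * norm x"
    by (rule onorm[OF matrix_vector_mul_bounded_linear])
  ultimately show ?thesis by (metis mult_right_mono norm_ge_zero order_trans transpose_matrix_vector)
qed

lemma gs_rows_len: "length (gs_rows j i) = i"
  by (induction i) (simp_all add: Let_def)

lemma gs_hat_norm: "norm (gs_hat j i) \<le> 1"
proof -
  define v where "v = j i - sum_list (map (\<lambda>h. (h \<bullet> j i) *\<^sub>R h) (gs_rows j i))"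
  have "gs_hat j i = (if norm v > 0 then v /\<^sub>R norm v else 0)"
    unfolding gs_hat_def v_def by (simp add: Let_def nth_append gs_rows_len)
  then show ?thesis by simp
qed

lemma gs_v_norm: "norm (gs_v j i) \<le> (1 + real i) * norm (j i)"
proof -
  have "norm (\<Sum>k<i. (gs_hat j k \<bullet> j i) *\<^sub>R gs_hat j k) \<le> (\<Sum>k<i. norm ((gs_hat j k \<bullet> j i) *\<^sub>R gs_hat j k))"
    by (rule norm_sum)
  also have "\<dots> \<le> (\<Sum>k<i. norm (j i))"
  proof (rule sum_mono)
    fix k
    have "norm ((gs_hat j k \<bullet> j i) *\<^sub>R gs_hat j k) = \<bar>gs_hat j k \<bullet> j i\<bar> * norm (gs_hat j k)" by simp
    also have "\<dots> \<le> (norm (gs_hat j k) * norm (j i)) * 1"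
      using gs_hat_norm[of j k] Cauchy_Schwarz_ineq2[of "gs_hat j k" "j i"]
      by (intro mult_mono) auto
    also have "\<dots> \<le> norm (j i)" using gs_hat_norm[of j k] by (simp add: mult_left_le_one_le)
    finally show "norm ((gs_hat j k \<bullet> j i) *\<^sub>R gs_hat j k) \<le> norm (j i)" .
  qed
  also have "\<dots> = real i * norm (j i)" by simp
  finally have "norm (\<Sum>k<i. (gs_hat j k \<bullet> j i) *\<^sub>R gs_hat j k) \<le> real i * norm (j i)" .
  then show ?thesis unfolding gs_v_def using norm_triangle_ineq4[of "j i" "\<Sum>k<i. (gs_hat j k \<bullet> j i) *\<^sub>R gs_hat j k"]
    by (simp add: algebra_simps)
qed

lemma gs_c_bound: "\<bar>gs_c j i k\<bar> \<le> (1 + real i) * norm (j i)"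
proof -
  have "\<bar>gs_hat j k \<bullet> j i\<bar> \<le> norm (j i)"
    using Cauchy_Schwarz_ineq2[of "gs_hat j k" "j i"] gs_hat_norm[of j k]
    by (meson mult_left_le_one_le norm_ge_zero order_trans)
  also have "\<dots> \<le> (1 + real i) * norm (j i)" by (simp add: mult_le_cancel_right1)
  finally have a: "\<bar>gs_hat j k \<bullet> j i\<bar> \<le> (1 + real i) * norm (j i)" .
  show ?thesis unfolding gs_c_def using a gs_v_norm[of j i] by auto
qed

lemma gs_cD_bound: "\<bar>gs_cD ms j i k\<bar> \<le> (1 + real i) * norm (j i)"
  unfolding gs_cD_def using gs_c_bound[of j i k] by auto

lemma abs_le_sqrt_sum:
  fixes a :: "nat \<Rightarrow> real"
  assumes "i < m"
  shows "\<bar>a i\<bar> \<le> sqrt (\<Sum>k<m. (a k)\<^sup>2)"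
proof -
  have "(a i)\<^sup>2 \<le> (\<Sum>k<m. (a k)\<^sup>2)"
    by (rule member_le_sum) (use assms in auto)
  then have "sqrt ((a i)\<^sup>2) \<le> sqrt (\<Sum>k<m. (a k)\<^sup>2)" by (rule real_sqrt_le_mono)
  then show ?thesis by simp
qed

lemma pik_bound:
  fixes Fq :: "real \<times> (real^'n) \<Rightarrow> nat \<Rightarrow> real^'n"
    and R :: "real \<times> (real^'n) \<Rightarrow> real^'n^'n"
  assumes BF: "\<And>i. i < sum_list ms \<Longrightarrow> norm (Fq x i) \<le> BF" and BR: "norm (matrix_inv (R x)) \<le> BR"
    and BL: "\<And>i k. i < sum_list ms \<Longrightarrow> k < sum_list ms \<Longrightarrow> \<bar>L x i k\<bar> \<le> BL"
    and rb: "\<And>i. i < sum_list ms \<Longrightarrow> \<bar>r x i - ft x i\<bar> \<le> \<rho>"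
    and nn: "0 \<le> BF" "0 \<le> BR" "0 \<le> BL" "0 \<le> \<rho>"
  shows "norm (pik_u ms ft Fq R r L x) \<le>
    (real CARD('n) * real CARD('n) * BR * (real (sum_list ms) * (real (sum_list ms) * ((1 + real (sum_list ms))
      * (real CARD('n) * real CARD('n) * BR * BF) * (real (sum_list ms) * BL))))) * \<rho>"
proof -
  define m where "m = sum_list ms"
  define Nn where "Nn = real CARD('n)"
  define Bj where "Bj = Nn * Nn * BR * BF"
  define j where "j = Jrows Fq R x"
  define w where "w = (\<lambda>i. \<Sum>k<m. L x i k * (r x k - ft x k))"
  define z where "z = (\<lambda>k. \<Sum>i<m. gs_cD ms j i k * w i)"
  define s where "s = (\<Sum>k<m. z k *\<^sub>R gs_hat j k)"
  have Bj0: "0 \<le> Bj" unfolding Bj_def Nn_def using nn by simp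
  have pu: "pik_u ms ft Fq R r L x = matrix_inv (R x) *v s"
    unfolding pik_u_def Let_def s_def z_def w_def j_def m_def ..
  have hj: "norm (j i) \<le> Bj" if "i < m" for i
  proof -
    have "norm (j i) \<le> Nn * Nn * norm (matrix_inv (R x)) * norm (Fq x i)"
      unfolding j_def Jrows_def Nn_def by (rule vm_bound)
    also have "\<dots> \<le> Nn * Nn * BR * BF"
      using BF[of i] BR that nn unfolding m_def Nn_def by (intro mult_mono) auto
    finally show ?thesis unfolding Bj_def .
  qed
  have hc: "\<bar>gs_cD ms j i k\<bar> \<le> (1 + real m) * Bj" if "i < m" for i k
  proof -
    have "\<bar>gs_cD ms j i k\<bar> \<le> (1 + real i) * norm (j i)" by (rule gs_cD_bound)
    also have "\<dots> \<le> (1 + real m) * Bj" using that hj[OF that] by (intro mult_mono) auto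
    finally show ?thesis .
  qed
  have hw: "\<bar>w i\<bar> \<le> real m * BL * \<rho>" if "i < m" for i
  proof -
    have "\<bar>w i\<bar> \<le> (\<Sum>k<m. \<bar>L x i k * (r x k - ft x k)\<bar>)" unfolding w_def by (rule sum_abs)
    also have "\<dots> \<le> (\<Sum>k<m. BL * \<rho>)"
    proof (rule sum_mono)
      fix k assume "k \<in> {..<m}"
      then show "\<bar>L x i k * (r x k - ft x k)\<bar> \<le> BL * \<rho>"
        using BL[of i k] rb[of k] that nn unfolding abs_mult m_def by (intro mult_mono) auto
    qed
    also have "\<dots> = real m * BL * \<rho>" by simp
    finally show ?thesis .
  qed
  have hz: "\<bar>z k\<bar> \<le> real m * ((1 + real m) * Bj * (real m * BL * \<rho>))" for k
  proof -
    have "\<bar>z k\<bar> \<le> (\<Sum>i<m. \<bar>gs_cD ms j i k * w i\<bar>)" unfolding z_def by (rule sum_abs)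
    also have "\<dots> \<le> (\<Sum>i<m. (1 + real m) * Bj * (real m * BL * \<rho>))"
    proof (rule sum_mono)
      fix i assume "i \<in> {..<m}"
      then show "\<bar>gs_cD ms j i k * w i\<bar> \<le> (1 + real m) * Bj * (real m * BL * \<rho>)"
        using hc[of i k] hw[of i] Bj0 unfolding abs_mult by (intro mult_mono) auto
    qed
    also have "\<dots> = real m * ((1 + real m) * Bj * (real m * BL * \<rho>))" by simp
    finally show ?thesis .
  qed
  have hs: "norm s \<le> real m * (real m * ((1 + real m) * Bj * (real m * BL * \<rho>)))"
  proof -
    have "norm s \<le> (\<Sum>k<m. norm (z k *\<^sub>R gs_hat j k))" unfolding s_def by (rule norm_sum)
    also have "\<dots> \<le> (\<Sum>k<m. real m * ((1 + real m) * Bj * (real m * BL * \<rho>)))"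
    proof (rule sum_mono)
      fix k
      have "norm (z k *\<^sub>R gs_hat j k) = \<bar>z k\<bar> * norm (gs_hat j k)" by simp
      also have "\<dots> \<le> \<bar>z k\<bar> * 1" using gs_hat_norm[of j k] by (intro mult_left_mono) auto
      also have "\<dots> \<le> real m * ((1 + real m) * Bj * (real m * BL * \<rho>))" using hz[of k] by simp
      finally show "norm (z k *\<^sub>R gs_hat j k) \<le> real m * ((1 + real m) * Bj * (real m * BL * \<rho>))" .
    qed
    also have "\<dots> = real m * (real m * ((1 + real m) * Bj * (real m * BL * \<rho>)))" by simp
    finally show ?thesis .
  qed
  have "norm (pik_u ms ft Fq R r L x) \<le> Nn * Nn * norm (matrix_inv (R x)) * norm s"
    unfolding pu Nn_def by (rule mv_bound)
  also have "\<dots> \<le> Nn * Nn * BR * (real m * (real m * ((1 + real m) * Bj * (real m * BL * \<rho>))))"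
    using BR hs nn by (intro mult_mono) (auto simp: Nn_def)
  finally show ?thesis unfolding m_def Nn_def Bj_def by (simp add: algebra_simps)
qed

theorem lemma13:
  fixes ms :: "nat list"
    and ft :: "real \<times> (real^'n) \<Rightarrow> nat \<Rightarrow> real"
    and Fq :: "real \<times> (real^'n) \<Rightarrow> nat \<Rightarrow> real^'n"
    and R :: "real \<times> (real^'n) \<Rightarrow> real^'n^'n"
    and r :: "real \<times> (real^'n) \<Rightarrow> nat \<Rightarrow> real"
    and L :: "real \<times> (real^'n) \<Rightarrow> nat \<Rightarrow> nat \<Rightarrow> real"
    and t0 :: real and q0 :: "real^'n"
  assumes l_ge2: "length ms \<ge> 2"
    and ms_pos: "\<forall>a<length ms. ms ! a \<ge> 1"
    and m_le_n: "sum_list ms \<le> CARD('n)"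
    and R_inv: "\<forall>x. invertible (R x)"
    and L_lower: "\<forall>x i k. i < sum_list ms \<and> k < sum_list ms \<and> blk ms i < blk ms k \<longrightarrow> L x i k = 0"
    and r'_lin: "\<exists>\<gamma> c. \<gamma> \<ge> 0 \<and> c \<ge> 0 \<and>
        (\<forall>t q. sqrt (\<Sum>i<sum_list ms. (r (t, q) i - ft (t, q) i)\<^sup>2) \<le> \<gamma> * norm q + c)"
    and Fq_bdd: "\<exists>B. \<forall>x. \<forall>i<sum_list ms. norm (Fq x i) \<le> B"
    and Rinv_bdd: "\<exists>B. \<forall>x. norm (matrix_inv (R x)) \<le> B"
    and L_bdd: "\<exists>B. \<forall>x. \<forall>i<sum_list ms. \<forall>k<sum_list ms. \<bar>L x i k\<bar> \<le> B"
  shows "\<exists>q. krasovskii_solution (pik_u ms ft Fq R r L) t0 q0 q"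
proof -
  obtain \<gamma> c where gc: "\<gamma> \<ge> 0" "c \<ge> 0"
    "\<And>t q. sqrt (\<Sum>i<sum_list ms. (r (t, q) i - ft (t, q) i)\<^sup>2) \<le> \<gamma> * norm q + c"
    using r'_lin by blast
  obtain BF0 where BF0: "\<And>x i. i < sum_list ms \<Longrightarrow> norm (Fq x i) \<le> BF0" using Fq_bdd by blast
  obtain BR0 where BR0: "\<And>x. norm (matrix_inv (R x)) \<le> BR0" using Rinv_bdd by blast
  obtain BL0 where BL0: "\<And>x i k. i < sum_list ms \<Longrightarrow> k < sum_list ms \<Longrightarrow> \<bar>L x i k\<bar> \<le> BL0" using L_bdd by blast
  define BF where "BF = max 0 BF0"
  define BR where "BR = max 0 BR0"
  define BL where "BL = max 0 BL0"
  define Kc where "Kc = (real CARD('n) * real CARD('n) * BR * (real (sum_list ms) * (real (sum_list ms) * ((1 + real (sum_list ms))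
      * (real CARD('n) * real CARD('n) * BR * BF) * (real (sum_list ms) * BL)))))"
  have Kc0: "0 \<le> Kc" unfolding Kc_def BF_def BR_def BL_def by simp
  define Mx where "Mx = Kc * (\<gamma> + c) + 1"
  have Mx: "0 < Mx"
  proof -
    have "0 \<le> Kc * (\<gamma> + c)" using Kc0 gc(1,2) by simp
    then show ?thesis unfolding Mx_def by linarith
  qed
  have ub: "norm (pik_u ms ft Fq R r L (t, q)) \<le> Mx * (1 + norm q)" for t q
  proof -
    define \<rho> where "\<rho> = \<gamma> * norm q + c"
    have \<rho>0: "0 \<le> \<rho>" unfolding \<rho>_def using gc by simp
    have "norm (pik_u ms ft Fq R r L (t, q)) \<le> Kc * \<rho>"
      unfolding Kc_def
    proof (rule pik_bound)
      show "\<And>i. i < sum_list ms \<Longrightarrow> norm (Fq (t, q) i) \<le> BF" unfolding BF_def using BF0 by (meson max.coboundedI2)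
      show "norm (matrix_inv (R (t, q))) \<le> BR" unfolding BR_def using BR0 by (meson max.coboundedI2)
      show "\<And>i k. i < sum_list ms \<Longrightarrow> k < sum_list ms \<Longrightarrow> \<bar>L (t, q) i k\<bar> \<le> BL"
        unfolding BL_def using BL0 by (meson max.coboundedI2)
      show "\<And>i. i < sum_list ms \<Longrightarrow> \<bar>r (t, q) i - ft (t, q) i\<bar> \<le> \<rho>"
        using abs_le_sqrt_sum[of _ "sum_list ms" "\<lambda>i. r (t, q) i - ft (t, q) i"] gc(3)[of t q]
        unfolding \<rho>_def by (meson order_trans)
    qed (use \<rho>0 in \<open>auto simp: BF_def BR_def BL_def\<close>)
    also have "\<dots> \<le> Kc * ((\<gamma> + c) * (1 + norm q))"
      unfolding \<rho>_def using Kc0 gc by (intro mult_left_mono) (auto simp: algebra_simps)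
    also have "\<dots> \<le> Mx * (1 + norm q)" unfolding Mx_def by (simp add: algebra_simps)
    finally show ?thesis .
  qed
  show ?thesis by (rule kras_exists[OF Mx ub])
qed

end
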